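(* Let $h$ be a probability density on $\mathbb{R}^n$, $0\le c_1<1<c_2$ with $\frac{c_2-c_1}{1-c_1}\in\mathbb{N}$, $\tilde{\mathcal{P}}=\tilde{\mathcal{P}}_{c_1,c_2,h}$, and $\varepsilon\ge0$ such that there exists $\beta\ge0$ with $1+g_\varepsilon^*(-e^\beta)\le\frac{(c_2-c_1e^\beta)(1-c_1)}{c_2-c_1}$. Let $\lambda^\star=\frac{e^\varepsilon-1}{(1-c_1)e^\varepsilon+c_2-1}$ and let $\mathbf{Q}^\star$ map $P\in\tilde{\mathcal{P}}$ with density $p$ to the continuous distribution with density $\lambda^\star p(x)+(1-\lambda^\star)h(x)$. Then $\mathbf{Q}^\star$ satisfies $g_\varepsilon$-FLDP and for every $f$-divergence \[ \sup_{P\in\tilde{\mathcal{P}}}D_f(P\|\mathbf{Q}^\star(P))=\mathcal{R}(\mathcal{Q}_{\mathbb{R}^n,\tilde{\mathcal{P}},g_\varepsilon},\tilde{\mathcal{P}},f)=\frac{1-r_1}{r_2-r_1}f(r_2)+\frac{r_2-1}{r_2-r_1}f(r_1), \] with $r_1=c_1\cdot\frac{(1-c_1)e^\varepsilon+c_2-1}{c_2-c_1}$ and $r_2=\frac{c_2}{c_2-c_1}\cdot\frac{(1-c_1)e^\varepsilon+c_2-1}{e^\varepsilon}$.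
   Context: $g_\varepsilon(\theta)=\max\{0,1-e^\varepsilon\theta,e^{-\varepsilon}(1-\theta)\}$ on $[0,1]$; $g_\varepsilon$-FLDP is equivalent to $\varepsilon$-LDP: $\mathbf{Q}(A\mid P)\le e^\varepsilon\mathbf{Q}(A\mid P')$ for all $P,P'$ and measurable $A$. A sampler is a map $\mathbf{Q}:\tilde{\mathcal{P}}\to\mathcal{P}(\mathbb{R}^n)$. Trade-off function $T(P,Q)(u)=\inf_\phi\{1-\mathbb{E}_Q[\phi]:\mathbb{E}_P[\phi]\le u\}$ over measurable $\phi$ with values in $[0,1]$; $\mathbf{Q}$ satisfies $g$-FLDP if $T(\mathbf{Q}(P),\mathbf{Q}(P'))(u)\ge g(u)$ for all $P,P'\in\tilde{\mathcal{P}}$ and $u\in[0,1]$; $\mathcal{Q}_{\mathbb{R}^n,\tilde{\mathcal{P}},g}$ is the set of such samplers. $g^*(y)=\sup_{x\in[0,1]}\{xy-g(x)\}$. $\tilde{\mathcal{P}}_{c_1,c_2,h}=\{P\text{ with density }p: c_1h\le p\le c_2h\text{ pointwise}\}$. $D_f(P\|Q)=\int qf(p/q)$ for convex $f:(0,\infty)\to\mathbb{R}$, $f(1)=0$, with $f(0)=\lim_{t\to0^+}f(t)$, $0f(0/0)=0$, $0f(a/0)=a\lim_{u\to\infty}f(u)/u$. $\mathcal{R}(\mathcal{Q}_{\mathbb{R}^n,\tilde{\mathcal{P}},g},\mathcal{S},f)=\inf_{\mathbf{Q}\in\mathcal{Q}_{\mathbb{R}^n,\tilde{\mathcal{P}},g}}\sup_{P\in\mathcal{S}}D_f(P\|\mathbf{Q}(P))$.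 *)

theory Defs
  imports "HOL-Probability.Probability"
begin

definition g_eps :: "real \<Rightarrow> real \<Rightarrow> real" where
  "g_eps \<epsilon> \<theta> = max 0 (max (1 - exp \<epsilon> * \<theta>) (exp (- \<epsilon>) * (1 - \<theta>)))"

definition conj01 :: "(real \<Rightarrow> real) \<Rightarrow> real \<Rightarrow> real" where
  "conj01 g y = (SUP x\<in>{0..1}. x * y - g x)"

definition tradeoff :: "'a measure \<Rightarrow> 'a measure \<Rightarrow> real \<Rightarrow> real" where
  "tradeoff P Q u = Inf {1 - (\<integral>x. \<phi> x \<partial>Q) | \<phi>.
      \<phi> \<in> borel_measurable P \<and> (\<forall>x. 0 \<le> \<phi> x \<and> \<phi> x \<le> 1) \<and> (\<integral>x. \<phi> x \<partial>P) \<le> u}"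

text \<open>A sampler on R^n (here: a Euclidean space 'a with Lebesgue/Borel structure)
  maps each distribution of the class to a Borel probability measure.\<close>
definition is_sampler :: "'a::euclidean_space measure set \<Rightarrow> ('a measure \<Rightarrow> 'a measure) \<Rightarrow> bool" where
  "is_sampler Ps Q \<longleftrightarrow> (\<forall>P\<in>Ps. prob_space (Q P) \<and> sets (Q P) = sets borel)"

definition fldp :: "(real \<Rightarrow> real) \<Rightarrow> 'a measure set \<Rightarrow> ('a measure \<Rightarrow> 'a measure) \<Rightarrow> bool" where
  "fldp g Ps Q \<longleftrightarrow> (\<forall>P\<in>Ps. \<forall>P'\<in>Ps. \<forall>u\<in>{0..1}. tradeoff (Q P) (Q P') u \<ge> g u)"

definition samplers :: "'a::euclidean_space measure set \<Rightarrow> (real \<Rightarrow> real) \<Rightarrow> ('a measure \<Rightarrow> 'a measure) set" where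
  "samplers Ps g = {Q. is_sampler Ps Q \<and> fldp g Ps Q}"

definition is_density :: "('a::euclidean_space \<Rightarrow> real) \<Rightarrow> bool" where
  "is_density p \<longleftrightarrow> p \<in> borel_measurable borel \<and> (\<forall>x. 0 \<le> p x)
      \<and> (\<integral>\<^sup>+ x. ennreal (p x) \<partial>lborel) = 1"

definition Pclass :: "real \<Rightarrow> real \<Rightarrow> ('a::euclidean_space \<Rightarrow> real) \<Rightarrow> 'a measure set" where
  "Pclass c1 c2 h = {density lborel (\<lambda>x. ennreal (p x)) | p.
      is_density p \<and> (\<forall>x. c1 * h x \<le> p x \<and> p x \<le> c2 * h x)}"

definition f_zero :: "(real \<Rightarrow> real) \<Rightarrow> ereal" where
  "f_zero f = Lim (at_right 0) (\<lambda>t. ereal (f t))"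

definition f_slope_inf :: "(real \<Rightarrow> real) \<Rightarrow> ereal" where
  "f_slope_inf f = Lim at_top (\<lambda>u. ereal (f u / u))"

definition f_ext :: "(real \<Rightarrow> real) \<Rightarrow> real \<Rightarrow> ereal" where
  "f_ext f t = (if 0 < t then ereal (f t) else f_zero f)"

text \<open>The integrand q f(p/q) with the conventions 0 f(0/0) = 0 and 0 f(a/0) = a f'(\<infinity>).\<close>
definition f_persp :: "(real \<Rightarrow> real) \<Rightarrow> real \<Rightarrow> real \<Rightarrow> ereal" where
  "f_persp f a b =
     (if 0 < b then (if 0 < a then ereal (b * f (a / b)) else ereal b * f_zero f)
      else (if 0 < a then ereal a * f_slope_inf f else 0))"

definition sum_meas :: "'a measure \<Rightarrow> 'a measure \<Rightarrow> 'a measure" where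
  "sum_meas P Q = measure_of (space P) (sets P) (\<lambda>A. emeasure P A + emeasure Q A)"

definition fdiv :: "(real \<Rightarrow> real) \<Rightarrow> 'a measure \<Rightarrow> 'a measure \<Rightarrow> ereal" where
  "fdiv f P Q =
     (let \<mu> = sum_meas P Q;
          p = (\<lambda>x. enn2real (RN_deriv \<mu> P x));
          q = (\<lambda>x. enn2real (RN_deriv \<mu> Q x));
          \<psi> = (\<lambda>x. f_persp f (p x) (q x))
      in enn2ereal (\<integral>\<^sup>+ x. e2ennreal (\<psi> x) \<partial>\<mu>) - enn2ereal (\<integral>\<^sup>+ x. e2ennreal (- \<psi> x) \<partial>\<mu>))"

definition minimax_risk :: "('a::euclidean_space measure \<Rightarrow> 'a measure) set \<Rightarrow> 'a measure set \<Rightarrow> (real \<Rightarrow> real) \<Rightarrow> ereal" where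
  "minimax_risk Qs S f = (INF Q\<in>Qs. SUP P\<in>S. fdiv f P (Q P))"

end

theory Submission
  imports Defs
begin

definition eint :: "'a measure \<Rightarrow> ('a \<Rightarrow> ereal) \<Rightarrow> ereal" where
  "eint M \<psi> = enn2ereal (\<integral>\<^sup>+ x. e2ennreal (\<psi> x) \<partial>M) - enn2ereal (\<integral>\<^sup>+ x. e2ennreal (- \<psi> x) \<partial>M)"

lemma enn2ereal_fin: "X < \<infinity> \<Longrightarrow> enn2ereal X = ereal (enn2real X)"
  by (cases X) auto

lemma eint_ge:
  assumes "integrable M \<phi>" "AE x in M. ereal (\<phi> x) \<le> \<psi> x"
  shows "ereal (integral\<^sup>L M \<phi>) \<le> eint M \<psi>"
proof -
  have i1: "(\<integral>\<^sup>+ x. ennreal (\<phi> x) \<partial>M) \<le> (\<integral>\<^sup>+ x. e2ennreal (\<psi> x) \<partial>M)"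
    apply (rule nn_integral_mono_AE) using assms(2) 
    by eventually_elim (metis e2ennreal_ereal e2ennreal_mono)
  have i2: "(\<integral>\<^sup>+ x. e2ennreal (- \<psi> x) \<partial>M) \<le> (\<integral>\<^sup>+ x. ennreal (- \<phi> x) \<partial>M)"
    apply (rule nn_integral_mono_AE) using assms(2)
    by eventually_elim (metis e2ennreal_ereal e2ennreal_mono ereal_minus_le_minus uminus_ereal.simps(1))
  have f1: "(\<integral>\<^sup>+ x. ennreal (\<phi> x) \<partial>M) < \<infinity>" and f2: "(\<integral>\<^sup>+ x. ennreal (- \<phi> x) \<partial>M) < \<infinity>"
    using assms(1) unfolding real_integrable_def by (auto simp: less_top)
  have "ereal (integral\<^sup>L M \<phi>) = enn2ereal (\<integral>\<^sup>+ x. ennreal (\<phi> x) \<partial>M) - enn2ereal (\<integral>\<^sup>+ x. ennreal (- \<phi> x) \<partial>M)"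
    unfolding real_lebesgue_integral_def[OF assms(1)] enn2ereal_fin[OF f1] enn2ereal_fin[OF f2]
    by simp
  also have "\<dots> \<le> eint M \<psi>"
    unfolding eint_def
    apply (rule ereal_minus_mono)
    using i1 i2 by (auto simp: less_eq_ennreal.rep_eq)
  finally show ?thesis .
qed

lemma eint_le:
  assumes "integrable M \<phi>" "AE x in M. \<psi> x \<le> ereal (\<phi> x)"
  shows "eint M \<psi> \<le> ereal (integral\<^sup>L M \<phi>)"
proof -
  have i1: "(\<integral>\<^sup>+ x. e2ennreal (\<psi> x) \<partial>M) \<le> (\<integral>\<^sup>+ x. ennreal (\<phi> x) \<partial>M)"
    apply (rule nn_integral_mono_AE) using assms(2) 
    by eventually_elim (metis e2ennreal_ereal e2ennreal_mono)
  have i2: "(\<integral>\<^sup>+ x. ennreal (- \<phi> x) \<partial>M) \<le> (\<integral>\<^sup>+ x. e2ennreal (- \<psi> x) \<partial>M)"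
    apply (rule nn_integral_mono_AE) using assms(2)
    by eventually_elim (metis e2ennreal_ereal e2ennreal_mono ereal_minus_le_minus uminus_ereal.simps(1))
  have f1: "(\<integral>\<^sup>+ x. ennreal (\<phi> x) \<partial>M) < \<infinity>" and f2: "(\<integral>\<^sup>+ x. ennreal (- \<phi> x) \<partial>M) < \<infinity>"
    using assms(1) unfolding real_integrable_def by (auto simp: less_top)
  have "ereal (integral\<^sup>L M \<phi>) = enn2ereal (\<integral>\<^sup>+ x. ennreal (\<phi> x) \<partial>M) - enn2ereal (\<integral>\<^sup>+ x. ennreal (- \<phi> x) \<partial>M)"
    unfolding real_lebesgue_integral_def[OF assms(1)] enn2ereal_fin[OF f1] enn2ereal_fin[OF f2]
    by simp
  moreover have "eint M \<psi> \<le> \<dots>"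
    unfolding eint_def
    apply (rule ereal_minus_mono)
    using i1 i2 by (auto simp: less_eq_ennreal.rep_eq)
  ultimately show ?thesis by simp
qed

lemma sum_meas_props:
  assumes P: "finite_measure P" and Q: "finite_measure Q" and sQ: "sets Q = sets P"
  shows "sets (sum_meas P Q) = sets P" "space (sum_meas P Q) = space P"
    "\<And>A. A \<in> sets P \<Longrightarrow> emeasure (sum_meas P Q) A = emeasure P A + emeasure Q A"
proof -
  show s: "sets (sum_meas P Q) = sets P"
    unfolding sum_meas_def by (simp add: sets.sigma_sets_eq sets.space_closed)
  then show "space (sum_meas P Q) = space P"
    unfolding sum_meas_def by (simp add: space_measure_of_conv)
  fix A assume A: "A \<in> sets P"
  have sQ': "space Q = space P" using sQ by (rule sets_eq_imp_space_eq)
  have "positive (sets P) (\<lambda>A. emeasure P A + emeasure Q A)"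
    by (simp add: positive_def)
  moreover have "countably_additive (sets P) (\<lambda>A. emeasure P A + emeasure Q A)"
    unfolding countably_additive_def
  proof (intro allI impI)
    fix F :: "nat \<Rightarrow> _" assume F: "range F \<subseteq> sets P" "disjoint_family F" "\<Union> (range F) \<in> sets P"
    have "(\<Sum>i. emeasure P (F i) + emeasure Q (F i)) = (\<Sum>i. emeasure P (F i)) + (\<Sum>i. emeasure Q (F i))"
      by (rule suminf_add[symmetric]) auto
    also have "\<dots> = emeasure P (\<Union> (range F)) + emeasure Q (\<Union> (range F))"
      using F sQ by (simp add: suminf_emeasure)
    finally show "(\<Sum>i. emeasure P (F i) + emeasure Q (F i)) = emeasure P (\<Union> (range F)) + emeasure Q (\<Union> (range F))" .
  qed
  ultimately show "emeasure (sum_meas P Q) A = emeasure P A + emeasure Q A"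
    unfolding sum_meas_def using A
    by (subst emeasure_measure_of_sigma) (auto simp: sets.sigma_algebra_axioms)
qed


lemma convex_subgrad:
  fixes f :: "real \<Rightarrow> real"
  assumes cf: "convex_on {0<..} f" and r: "0 < r"
  obtains g where "\<And>t. 0 < t \<Longrightarrow> f r + g * (t - r) \<le> f t"
proof -
  define S where "S = (\<lambda>s. (f r - f s) / (r - s)) ` {0<..<r}"
  have sl: "(f r - f s) / (r - s) \<le> (f y - f r) / (y - r)" if "0 < s" "s < r" "r < y" for s y
  proof -
    have "(f s - f r) / (s - r) \<le> (f r - f y) / (r - y)"
      using convex_on_slope_le[OF cf, of s y r] that by auto
    then show ?thesis by (smt (verit, ccfv_threshold) minus_divide_divide minus_diff_eq)
  qed
  have ne: "S \<noteq> {}" unfolding S_def using r by auto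
  have bdd: "bdd_above S" unfolding S_def
    using sl[of _ "r+1"] r by (intro bdd_aboveI[of _ "(f (r+1) - f r) / (r + 1 - r)"]) auto
  define g where "g = Sup S"
  show ?thesis
  proof (rule that)
    fix t :: real assume t: "0 < t"
    consider "t < r" | "t = r" | "r < t" by linarith
    then show "f r + g * (t - r) \<le> f t"
    proof cases
      case 1
      have "(f r - f t) / (r - t) \<le> g" unfolding g_def
        by (rule cSup_upper[OF _ bdd]) (use t 1 in \<open>auto simp: S_def\<close>)
      then have "f r - f t \<le> g * (r - t)" using 1 by (simp add: divide_le_eq)
      then show ?thesis by (simp add: algebra_simps)
    next
      case 2 then show ?thesis by simp
    next
      case 3
      have "g \<le> (f t - f r) / (t - r)" unfolding g_def
        by (rule cSup_least[OF ne]) (use sl 3 in \<open>auto simp: S_def\<close>)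
      then have "g * (t - r) \<le> f t - f r" using 3 by (simp add: le_divide_eq)
      then show ?thesis by simp
    qed
  qed
qed

lemma f_zero_tendsto:
  fixes f :: "real \<Rightarrow> real"
  assumes cf: "convex_on {0<..} f"
  shows "((\<lambda>t. ereal (f t)) \<longlongrightarrow> f_zero f) (at_right 0)"
    and "f_zero f = (SUP t\<in>{0<..<1}. ereal (f t - (SOME g. \<forall>t>0. f 1 + g * (t - 1) \<le> f t) * t))"
proof -
  define g where "g = (SOME g. \<forall>t>0. f 1 + g * (t - 1) \<le> f t)"
  have "\<exists>g. \<forall>t>0. f 1 + g * (t - 1) \<le> f t"
    using convex_subgrad[OF cf, of 1] by (metis zero_less_one)
  then have "\<forall>t>0. f 1 + g * (t - 1) \<le> f t"
    unfolding g_def by (rule someI_ex)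
  then have g: "\<And>t. t > 0 \<Longrightarrow> f 1 + g * (t - 1) \<le> f t" by blast
  define u where "u = (\<lambda>t. f t - g * t)"
  have u1: "u 1 \<le> u s" if "s > 0" for s using g[OF that] unfolding u_def by (simp add: algebra_simps)
  have mono: "u t \<le> u s" if st: "0 < s" "s < t" "t \<le> 1" for s t
  proof (cases "t = 1")
    case True then show ?thesis using u1 st by simp
  next
    case False
    define a where "a = (t - s) / (1 - s)"
    have a: "0 \<le> a" "a \<le> 1" using st False by (auto simp: a_def field_simps)
    have "a * (1 - s) = t - s" using st False by (simp add: a_def)
    then have tt: "(1 - a) *\<^sub>R s + a *\<^sub>R 1 = t" by (simp add: algebra_simps)
    have "f t \<le> (1 - a) * f s + a * f 1"
      using convex_onD[OF cf, of a s 1] a st tt by auto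
    have t_eq: "t = s + a * (1 - s)" using \<open>a * (1 - s) = t - s\<close> by simp
    have e: "g * t = (1 - a) * (g * s) + a * g" unfolding t_eq by (simp add: algebra_simps)
    have e2: "(1 - a) * (f s - g * s) + a * (f 1 - g * 1) = (1 - a) * f s + a * f 1 - ((1 - a) * (g * s) + a * g)"
      by (simp add: algebra_simps)
    have "u t \<le> (1 - a) * u s + a * u 1"
      unfolding u_def using \<open>f t \<le> (1 - a) * f s + a * f 1\<close> e e2 by linarith
    also have "\<dots> \<le> (1 - a) * u s + a * u s" using u1[of s] st a by (intro add_mono mult_left_mono) auto
    finally show ?thesis by (simp add: algebra_simps)
  qed
  define L where "L = (SUP t\<in>{0<..<1}. ereal (u t))"
  have uL: "((\<lambda>t. ereal (u t)) \<longlongrightarrow> L) (at_right 0)"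
  proof (rule increasing_tendsto)
    show "\<forall>\<^sub>F n in at_right 0. ereal (u n) \<le> L"
      unfolding eventually_at_right[of 0 1, OF zero_less_one]
      by (intro exI[of _ 1]) (auto simp: L_def intro!: SUP_upper)
  next
    fix x assume "x < L"
    then obtain t where t: "t \<in> {0<..<1}" "x < ereal (u t)" unfolding L_def less_SUP_iff by blast
    have "x < ereal (u n)" if "0 < n" "n < t" for n
    proof -
      have "u t \<le> u n" using mono[of n t] that t by auto
      then show ?thesis using t(2) by (meson ereal_less_eq(3) less_le_trans)
    qed
    then show "\<forall>\<^sub>F n in at_right 0. x < ereal (u n)"
      using t by (subst eventually_at_right[of 0 t]) auto
  qed
  have Lfin: "L \<noteq> - \<infinity>"
  proof -
    have "ereal (u (1/2)) \<le> L" unfolding L_def by (rule SUP_upper) auto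
    then show ?thesis by auto
  qed
  have gt: "((\<lambda>t. ereal (g * t)) \<longlongrightarrow> ereal 0) (at_right 0)"
    by (simp add: lim_ereal, intro tendsto_eq_intros) auto
  have "((\<lambda>t. ereal (u t) + ereal (g * t)) \<longlongrightarrow> L + ereal 0) (at_right 0)"
    by (rule tendsto_add_ereal_general1[OF _ uL gt]) simp
  then have lim: "((\<lambda>t. ereal (f t)) \<longlongrightarrow> L) (at_right 0)"
    by (simp add: u_def)
  then have "f_zero f = L" unfolding f_zero_def by (intro tendsto_Lim) auto
  then show "((\<lambda>t. ereal (f t)) \<longlongrightarrow> f_zero f) (at_right 0)" using lim by simp
  show "f_zero f = (SUP t\<in>{0<..<1}. ereal (f t - (SOME g. \<forall>t>0. f 1 + g * (t - 1) \<le> f t) * t))"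
    using \<open>f_zero f = L\<close> by (simp add: L_def u_def g_def)
qed

lemma f_zero_not_MInf:
  assumes cf: "convex_on {0<..} f"
  shows "f_zero f \<noteq> - \<infinity>"
proof -
  have "ereal (f (1/2) - (SOME g. \<forall>t>0. f 1 + g * (t - 1) \<le> f t) * (1/2)) \<le> f_zero f"
    unfolding f_zero_tendsto(2)[OF cf] by (rule SUP_upper) auto
  then show ?thesis by auto
qed

lemma f_zero_ge:
  assumes cf: "convex_on {0<..} f" and mn: "\<And>t. 0 < t \<Longrightarrow> \<alpha> * t + \<gamma> \<le> f t"
  shows "ereal \<gamma> \<le> f_zero f"
proof (rule tendsto_le[OF trivial_limit_at_right_real f_zero_tendsto(1)[OF cf]])
  show "((\<lambda>t. ereal (\<alpha> * t + \<gamma>)) \<longlongrightarrow> ereal \<gamma>) (at_right 0)"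
    by (simp add: lim_ereal, intro tendsto_eq_intros) auto
  show "\<forall>\<^sub>F x in at_right 0. ereal (\<alpha> * x + \<gamma>) \<le> ereal (f x)"
    using mn by (auto simp: eventually_at_right_less eventually_at_filter)
qed

lemma f_slope_tendsto:
  fixes f :: "real \<Rightarrow> real"
  assumes cf: "convex_on {0<..} f"
  shows "((\<lambda>t. ereal (f t / t)) \<longlongrightarrow> f_slope_inf f) at_top"
proof -
  define s where "s = (\<lambda>t. (f t - f 1) / (t - 1))"
  have mono: "s t \<le> s y" if "1 < t" "t < y" for t y
    using convex_on_slope_le(1)[OF cf, of 1 y t] that unfolding s_def
    by (smt (verit, ccfv_threshold) greaterThan_iff minus_divide_divide minus_diff_eq)
  define L where "L = (SUP t\<in>{1<..}. ereal (s t))"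
  have sL: "((\<lambda>t. ereal (s t)) \<longlongrightarrow> L) at_top"
  proof (rule increasing_tendsto)
    show "\<forall>\<^sub>F n in at_top. ereal (s n) \<le> L"
      unfolding eventually_at_top_linorder
      by (intro exI[of _ 2]) (auto simp: L_def intro!: SUP_upper)
  next
    fix x assume "x < L"
    then obtain t where t: "t \<in> {1<..}" "x < ereal (s t)" unfolding L_def less_SUP_iff by blast
    have "x < ereal (s n)" if "t + 1 \<le> n" for n
    proof -
      have "s t \<le> s n" using mono[of t n] that t by auto
      then show ?thesis using t(2) by (meson ereal_less_eq(3) less_le_trans)
    qed
    then show "\<forall>\<^sub>F n in at_top. x < ereal (s n)"
      unfolding eventually_at_top_linorder by blast
  qed
  have Lfin: "L \<noteq> - \<infinity>"
  proof -
    have "ereal (s 2) \<le> L" unfolding L_def by (rule SUP_upper) auto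
    then show ?thesis by auto
  qed
  have t1: "((\<lambda>t. ereal ((t - 1) / t)) \<longlongrightarrow> ereal 1) at_top"
  proof -
    have "((\<lambda>t. 1 - 1 / t) \<longlongrightarrow> 1 - 0) (at_top :: real filter)"
      by (intro tendsto_intros tendsto_divide_0[OF tendsto_const] filterlim_at_top_imp_at_infinity[OF filterlim_ident])
    moreover have "\<forall>\<^sub>F t in at_top. 1 - 1 / t = (t - 1) / (t::real)"
      unfolding eventually_at_top_linorder by (intro exI[of _ 1]) (auto simp: field_simps)
    ultimately show ?thesis by (simp add: lim_ereal tendsto_cong)
  qed
  have t2: "((\<lambda>t. ereal (f 1 / t)) \<longlongrightarrow> ereal 0) at_top"
    by (simp add: lim_ereal) (intro tendsto_divide_0[OF tendsto_const] filterlim_at_top_imp_at_infinity[OF filterlim_ident])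
  have "((\<lambda>t. ereal (s t) * ereal ((t - 1) / t)) \<longlongrightarrow> L * ereal 1) at_top"
    by (rule tendsto_mult_ereal[OF sL t1]) auto
  then have "((\<lambda>t. ereal (s t) * ereal ((t - 1) / t) + ereal (f 1 / t)) \<longlongrightarrow> L * ereal 1 + ereal 0) at_top"
    by (rule tendsto_add_ereal_general1[OF _ _ t2, rotated]) simp
  moreover have "L * ereal 1 + ereal 0 = L" by simp
  ultimately have A2: "((\<lambda>t. ereal (s t) * ereal ((t - 1) / t) + ereal (f 1 / t)) \<longlongrightarrow> L) at_top"
    by metis
  have "\<forall>\<^sub>F t in at_top. ereal (s t) * ereal ((t - 1) / t) + ereal (f 1 / t) = ereal (f t / t)"
    unfolding eventually_at_top_linorder by (intro exI[of _ 2]) (auto simp: s_def field_simps)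
  with A2 have lim: "((\<lambda>t. ereal (f t / t)) \<longlongrightarrow> L) at_top"
    by (rule Lim_transform_eventually)
  then have "f_slope_inf f = L" unfolding f_slope_inf_def by (intro tendsto_Lim) auto
  then show ?thesis using lim by simp
qed

lemma f_slope_ge:
  assumes cf: "convex_on {0<..} f" and mn: "\<And>t. 0 < t \<Longrightarrow> \<alpha> * t + \<gamma> \<le> f t"
  shows "ereal \<alpha> \<le> f_slope_inf f"
proof (rule tendsto_le[OF trivial_limit_at_top_linorder f_slope_tendsto[OF cf]])
  have "((\<lambda>t. \<alpha> + \<gamma> / t) \<longlongrightarrow> \<alpha> + 0) at_top"
    by (intro tendsto_add tendsto_const tendsto_divide_0[OF tendsto_const] filterlim_at_top_imp_at_infinity[OF filterlim_ident])
  then show "((\<lambda>t. ereal (\<alpha> + \<gamma> / t)) \<longlongrightarrow> ereal \<alpha>) at_top"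
    by (simp add: lim_ereal)
  have "\<alpha> + \<gamma> / x \<le> f x / x" if "1 \<le> x" for x
  proof -
    have "(\<alpha> * x + \<gamma>) / x \<le> f x / x" using mn[of x] that by (intro divide_right_mono) auto
    moreover have "(\<alpha> * x + \<gamma>) / x = \<alpha> + \<gamma> / x" using that by (simp add: field_simps)
    ultimately show ?thesis by simp
  qed
  then show "\<forall>\<^sub>F x in at_top. ereal (\<alpha> + \<gamma> / x) \<le> ereal (f x / x)"
    unfolding eventually_at_top_linorder by auto
qed

lemma persp_ge:
  assumes cf: "convex_on {0<..} f" and mn: "\<And>t. 0 < t \<Longrightarrow> \<alpha> * t + \<gamma> \<le> f t"
    and a: "0 \<le> a" and b: "0 \<le> b"
  shows "ereal (\<alpha> * a + \<gamma> * b) \<le> f_persp f a b"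
proof -
  consider "0 < a" "0 < b" | "a = 0" "0 < b" | "0 < a" "b = 0" | "a = 0" "b = 0" using a b by linarith
  then show ?thesis
  proof cases
    case 1
    have "\<alpha> * (a / b) + \<gamma> \<le> f (a / b)" using mn[of "a/b"] 1 by simp
    then have "b * (\<alpha> * (a / b) + \<gamma>) \<le> b * f (a / b)" using 1 by (intro mult_left_mono) auto
    moreover have "b * (\<alpha> * (a / b) + \<gamma>) = \<alpha> * a + \<gamma> * b" using 1 by (simp add: field_simps)
    ultimately have "\<alpha> * a + \<gamma> * b \<le> b * f (a / b)" by linarith
    then show ?thesis using 1 by (simp add: f_persp_def)
  next
    case 2
    have "ereal b * ereal \<gamma> \<le> ereal b * f_zero f"
      by (rule ereal_mult_left_mono[OF f_zero_ge[OF cf mn]]) (use 2 in auto)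
    then show ?thesis using 2 by (simp add: f_persp_def mult.commute)
  next
    case 3
    have "ereal a * ereal \<alpha> \<le> ereal a * f_slope_inf f"
      by (rule ereal_mult_left_mono[OF f_slope_ge[OF cf mn]]) (use 3 in auto)
    then show ?thesis using 3 by (simp add: f_persp_def mult.commute)
  next
    case 4 then show ?thesis by (simp add: f_persp_def)
  qed
qed

lemma convex_chord:
  fixes f :: "real \<Rightarrow> real"
  assumes cf: "convex_on {0<..} f" and r: "0 < r1" "r1 < r2" "r1 \<le> t" "t \<le> r2"
  shows "f t \<le> ((r2 - t) * f r1 + (t - r1) * f r2) / (r2 - r1)"
proof -
  define a where "a = (t - r1) / (r2 - r1)"
  have a: "0 \<le> a" "a \<le> 1" using r by (auto simp: a_def field_simps)
  have "a * (r2 - r1) = t - r1" using r by (simp add: a_def)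
  then have tt: "(1 - a) *\<^sub>R r1 + a *\<^sub>R r2 = t" by (simp add: algebra_simps)
  have "f t \<le> (1 - a) * f r1 + a * f r2"
    using convex_onD[OF cf, of a r1 r2] a r tt by auto
  also have "\<dots> = ((r2 - t) * f r1 + (t - r1) * f r2) / (r2 - r1)"
  proof -
    have "1 - a = (r2 - t) / (r2 - r1)" using r by (simp add: a_def field_simps)
    then show ?thesis unfolding a_def by (simp add: add_divide_distrib)
  qed
  finally show ?thesis .
qed

lemma f_zero_chord:
  fixes f :: "real \<Rightarrow> real"
  assumes cf: "convex_on {0<..} f" and F0: "f_zero f = ereal F0" and t: "0 < t" "t \<le> b"
  shows "f t \<le> ((b - t) * F0 + t * f b) / b"
proof (cases "t = b")
  case True then show ?thesis using t by (simp add: field_simps)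
next
  case False
  then have tb: "t < b" using t by simp
  have lim0: "(f \<longlongrightarrow> F0) (at_right 0)"
    using f_zero_tendsto(1)[OF cf] F0 by (simp add: lim_ereal)
  have "((\<lambda>d. ((b - t) * f d + (t - d) * f b) / (b - d)) \<longlongrightarrow> ((b - t) * F0 + (t - 0) * f b) / (b - 0)) (at_right 0)"
    using t by (intro tendsto_intros lim0) auto
  moreover have "\<forall>\<^sub>F d in at_right 0. f t \<le> ((b - t) * f d + (t - d) * f b) / (b - d)"
  proof -
    have "f t \<le> ((b - t) * f d + (t - d) * f b) / (b - d)" if "0 < d" "d < t" for d
      using convex_chord[OF cf, of d b t] that tb by simp
    then show ?thesis using t by (subst eventually_at_right[of 0 t]) auto
  qed
  ultimately show ?thesis
    by (intro tendsto_le[OF trivial_limit_at_right_real _ tendsto_const]) auto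
qed

lemma f_zero_approx:
  fixes f :: "real \<Rightarrow> real"
  assumes cf: "convex_on {0<..} f" and y: "ereal y < f_zero f" and b: "0 < b"
  shows "\<exists>d g. 0 < d \<and> d < b \<and> (\<forall>t>0. f d + g * (t - d) \<le> f t) \<and> y < f d - g * d"
proof -
  obtain y' where y': "ereal y < ereal y'" "ereal y' < f_zero f" using ereal_dense2[OF y] by blast
  have e1: "\<forall>\<^sub>F d in at_right 0. ereal y' < ereal (f d)"
    using order_tendstoD(1)[OF f_zero_tendsto(1)[OF cf] y'(2)] .
  have "((\<lambda>d. (b * y' - d * f b) / (b - d)) \<longlongrightarrow> (b * y' - 0 * f b) / (b - 0)) (at_right 0)"
    using b by (intro tendsto_intros) auto
  then have "((\<lambda>d. (b * y' - d * f b) / (b - d)) \<longlongrightarrow> y') (at_right 0)" using b by simp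
  then have e2: "\<forall>\<^sub>F d in at_right 0. y < (b * y' - d * f b) / (b - d)"
    using y'(1) by (intro order_tendstoD(1)) auto
  have e3: "\<forall>\<^sub>F d in at_right 0. 0 < d \<and> d < b"
    using b by (subst eventually_at_right[of 0 b]) auto
  have "\<forall>\<^sub>F d in at_right 0. (ereal y' < ereal (f d) \<and> y < (b * y' - d * f b) / (b - d)) \<and> (0 < d \<and> d < b)"
    by (intro eventually_conj e1 e2 e3)
  then obtain d where d: "y' < f d" "y < (b * y' - d * f b) / (b - d)" "0 < d" "d < b"
    using eventually_happens[of _ "at_right (0::real)"] by auto
  obtain g where g: "\<And>t. 0 < t \<Longrightarrow> f d + g * (t - d) \<le> f t" using convex_subgrad[OF cf d(3)] by blast
  have "f d + g * (b - d) \<le> f b" using g b by simp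
  then have "g * (b - d) \<le> f b - f d" by simp
  then have "g \<le> (f b - f d) / (b - d)" using d by (simp add: le_divide_eq)
  then have "g * d \<le> (f b - f d) / (b - d) * d" using d by (intro mult_right_mono) auto
  then have "g * d \<le> d * (f b - f d) / (b - d)" by (simp add: mult.commute)
  then have "f d - d * (f b - f d) / (b - d) \<le> f d - g * d" by simp
  moreover have "f d - d * (f b - f d) / (b - d) = (b * f d - d * f b) / (b - d)" using d by (simp add: field_simps)
  moreover have "(b * y' - d * f b) / (b - d) < (b * f d - d * f b) / (b - d)"
    using d by (intro divide_strict_right_mono) auto
  ultimately have "y < f d - g * d" using d(2) by linarith
  then show ?thesis using g d by blast
qed


definition Qfun :: "real \<Rightarrow> ('a::euclidean_space \<Rightarrow> real) \<Rightarrow> 'a measure \<Rightarrow> 'a measure" where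
  "Qfun lam h P = density lborel
              (\<lambda>x. ennreal lam * RN_deriv lborel P x + ennreal (1 - lam) * ennreal (h x))"

lemma Qfun_eq:
  fixes p h :: "'a::euclidean_space \<Rightarrow> real"
  assumes p: "is_density p" and h: "is_density h" and lam: "0 \<le> lam" "lam \<le> 1"
  shows "Qfun lam h (density lborel (\<lambda>x. ennreal (p x))) = density lborel (\<lambda>x. ennreal (lam * p x + (1 - lam) * h x))"
    and "prob_space (density lborel (\<lambda>x. ennreal (lam * p x + (1 - lam) * h x)))"
proof -
  have pm: "p \<in> borel_measurable borel" and p0: "\<And>x. 0 \<le> p x" and p1: "(\<integral>\<^sup>+ x. ennreal (p x) \<partial>lborel) = 1"
    using p unfolding is_density_def by auto
  have hm: "h \<in> borel_measurable borel" and h0: "\<And>x. 0 \<le> h x" and h1: "(\<integral>\<^sup>+ x. ennreal (h x) \<partial>lborel) = 1"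
    using h unfolding is_density_def by auto
  have "AE x in lborel. ennreal (p x) = RN_deriv lborel (density lborel (\<lambda>x. ennreal (p x))) x"
    by (rule sigma_finite_measure.RN_deriv_unique[OF sigma_finite_lborel]) (use pm in auto)
  then have "AE x in lborel. ennreal lam * RN_deriv lborel (density lborel (\<lambda>x. ennreal (p x))) x + ennreal (1 - lam) * ennreal (h x)
      = ennreal (lam * p x + (1 - lam) * h x)"
    by eventually_elim (use lam p0 h0 in \<open>simp add: ennreal_mult ennreal_plus\<close>)
  then show "Qfun lam h (density lborel (\<lambda>x. ennreal (p x))) = density lborel (\<lambda>x. ennreal (lam * p x + (1 - lam) * h x))"
    unfolding Qfun_def by (intro density_cong) (use pm hm in auto)
  have "(\<integral>\<^sup>+ x. ennreal (lam * p x + (1 - lam) * h x) \<partial>lborel)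
      = (\<integral>\<^sup>+ x. ennreal lam * ennreal (p x) + ennreal (1 - lam) * ennreal (h x) \<partial>lborel)"
    using lam p0 h0 by (intro nn_integral_cong) (simp add: ennreal_mult ennreal_plus)
  also have "\<dots> = ennreal lam * (\<integral>\<^sup>+ x. ennreal (p x) \<partial>lborel) + ennreal (1 - lam) * (\<integral>\<^sup>+ x. ennreal (h x) \<partial>lborel)"
    using pm hm by (simp add: nn_integral_add nn_integral_cmult)
  also have "\<dots> = 1" using p1 h1 lam by (simp flip: ennreal_plus)
  finally have I: "(\<integral>\<^sup>+ x. ennreal (lam * p x + (1 - lam) * h x) \<partial>lborel) = 1" .
  note [measurable] = pm hm
  have "emeasure (density lborel (\<lambda>x. ennreal (lam * p x + (1 - lam) * h x))) (space lborel) = 1"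
    by (subst emeasure_density) (measurable, simp add: I)
  then show "prob_space (density lborel (\<lambda>x. ennreal (lam * p x + (1 - lam) * h x)))"
    by (intro prob_spaceI) simp
qed

lemma ratio_int_le:
  fixes q1 q2 :: "'a::euclidean_space \<Rightarrow> real"
  assumes q1: "q1 \<in> borel_measurable borel" "\<And>x. 0 \<le> q1 x" and q2: "q2 \<in> borel_measurable borel" "\<And>x. 0 \<le> q2 x"
    and P1: "prob_space (density lborel (\<lambda>x. ennreal (q1 x)))"
    and P2: "prob_space (density lborel (\<lambda>x. ennreal (q2 x)))"
    and E: "0 \<le> E" and rat: "\<And>x. q2 x \<le> E * q1 x"
    and phi: "\<phi> \<in> borel_measurable borel" "\<And>x. 0 \<le> \<phi> x" "\<And>x. \<phi> x \<le> 1"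
  shows "(\<integral>x. \<phi> x \<partial>density lborel (\<lambda>x. ennreal (q2 x))) \<le> E * (\<integral>x. \<phi> x \<partial>density lborel (\<lambda>x. ennreal (q1 x)))"
proof -
  let ?M1 = "density lborel (\<lambda>x. ennreal (q1 x))" and ?M2 = "density lborel (\<lambda>x. ennreal (q2 x))"
  interpret P1: prob_space ?M1 by fact
  interpret P2: prob_space ?M2 by fact
  have "(\<integral>\<^sup>+ x. ennreal (\<phi> x) \<partial>?M2) = (\<integral>\<^sup>+ x. ennreal (q2 x) * ennreal (\<phi> x) \<partial>lborel)"
    using q2 phi by (subst nn_integral_density) auto
  also have "\<dots> \<le> (\<integral>\<^sup>+ x. ennreal E * (ennreal (q1 x) * ennreal (\<phi> x)) \<partial>lborel)"
  proof (intro nn_integral_mono)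
    fix x
    have "q2 x * \<phi> x \<le> E * (q1 x * \<phi> x)" using mult_right_mono[OF rat phi(2)] by (simp add: mult.assoc)
    then have "ennreal (q2 x * \<phi> x) \<le> ennreal (E * (q1 x * \<phi> x))" by (rule ennreal_leI)
    then show "ennreal (q2 x) * ennreal (\<phi> x) \<le> ennreal E * (ennreal (q1 x) * ennreal (\<phi> x))"
      using q1 q2 phi E by (simp add: ennreal_mult)
  qed
  also have "\<dots> = ennreal E * (\<integral>\<^sup>+ x. ennreal (\<phi> x) \<partial>?M1)"
    using q1 phi by (subst nn_integral_density) (auto simp: nn_integral_cmult)
  finally have le: "(\<integral>\<^sup>+ x. ennreal (\<phi> x) \<partial>?M2) \<le> ennreal E * (\<integral>\<^sup>+ x. ennreal (\<phi> x) \<partial>?M1)" .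
  have fin1: "(\<integral>\<^sup>+ x. ennreal (\<phi> x) \<partial>?M1) < \<infinity>"
  proof -
    have "(\<integral>\<^sup>+ x. ennreal (\<phi> x) \<partial>?M1) \<le> (\<integral>\<^sup>+ x. 1 \<partial>?M1)"
      using phi by (intro nn_integral_mono) auto
    also have "\<dots> = 1" using P1.emeasure_space_1 by simp
    finally show ?thesis by (simp add: le_less_trans)
  qed
  have "(\<integral>x. \<phi> x \<partial>?M2) = enn2real (\<integral>\<^sup>+ x. ennreal (\<phi> x) \<partial>?M2)"
    using phi by (intro integral_eq_nn_integral) auto
  also have "\<dots> \<le> enn2real (ennreal E * (\<integral>\<^sup>+ x. ennreal (\<phi> x) \<partial>?M1))"
    using le fin1 by (intro enn2real_mono) (auto simp: ennreal_mult_less_top)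
  also have "\<dots> = E * enn2real (\<integral>\<^sup>+ x. ennreal (\<phi> x) \<partial>?M1)"
    using E by (simp add: enn2real_mult)
  also have "enn2real (\<integral>\<^sup>+ x. ennreal (\<phi> x) \<partial>?M1) = (\<integral>x. \<phi> x \<partial>?M1)"
    using phi by (intro integral_eq_nn_integral[symmetric]) auto
  finally show ?thesis .
qed

lemma tradeoff_ge:
  fixes q1 q2 :: "'a::euclidean_space \<Rightarrow> real"
  assumes q1: "q1 \<in> borel_measurable borel" "\<And>x. 0 \<le> q1 x" and q2: "q2 \<in> borel_measurable borel" "\<And>x. 0 \<le> q2 x"
    and P1: "prob_space (density lborel (\<lambda>x. ennreal (q1 x)))"
    and P2: "prob_space (density lborel (\<lambda>x. ennreal (q2 x)))"
    and eps: "0 \<le> \<epsilon>" and r12: "\<And>x. q2 x \<le> exp \<epsilon> * q1 x" and r21: "\<And>x. q1 x \<le> exp \<epsilon> * q2 x"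
    and u: "0 \<le> u" "u \<le> 1"
  shows "g_eps \<epsilon> u \<le> tradeoff (density lborel (\<lambda>x. ennreal (q1 x))) (density lborel (\<lambda>x. ennreal (q2 x))) u"
proof -
  let ?M1 = "density lborel (\<lambda>x. ennreal (q1 x))" and ?M2 = "density lborel (\<lambda>x. ennreal (q2 x))"
  interpret P1: prob_space ?M1 by fact
  interpret P2: prob_space ?M2 by fact
  show ?thesis unfolding tradeoff_def
  proof (rule cInf_greatest)
    show "{1 - integral\<^sup>L ?M2 \<phi> |\<phi>. \<phi> \<in> borel_measurable ?M1 \<and> (\<forall>x. 0 \<le> \<phi> x \<and> \<phi> x \<le> 1) \<and> integral\<^sup>L ?M1 \<phi> \<le> u} \<noteq> {}"
      using u by (intro ex_in_conv[THEN iffD1] exI[of _ "1 - integral\<^sup>L ?M2 (\<lambda>_. 0)"] CollectI exI[of _ "\<lambda>_. 0"]) auto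
  next
    fix y assume "y \<in> {1 - integral\<^sup>L ?M2 \<phi> |\<phi>. \<phi> \<in> borel_measurable ?M1 \<and> (\<forall>x. 0 \<le> \<phi> x \<and> \<phi> x \<le> 1) \<and> integral\<^sup>L ?M1 \<phi> \<le> u}"
    then obtain \<phi> where y: "y = 1 - integral\<^sup>L ?M2 \<phi>" and phm: "\<phi> \<in> borel_measurable ?M1"
      and ph: "\<And>x. 0 \<le> \<phi> x" "\<And>x. \<phi> x \<le> 1" and a: "integral\<^sup>L ?M1 \<phi> \<le> u" by blast
    have phb: "\<phi> \<in> borel_measurable borel" using phm by simp
    have i1: "integrable ?M1 \<phi>" "integrable ?M2 \<phi>"
      using phb ph by (auto intro!: P1.integrable_const_bound[of _ 1] P2.integrable_const_bound[of _ 1])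
    have a2: "integral\<^sup>L ?M2 \<phi> \<le> 1"
      using integral_mono[OF i1(2) P2.integrable_const[of 1]] ph P2.prob_space by simp
    have b1: "integral\<^sup>L ?M2 \<phi> \<le> exp \<epsilon> * integral\<^sup>L ?M1 \<phi>"
      by (rule ratio_int_le[OF q1 q2 P1 P2 _ r12 phb ph]) simp
    have b2: "integral\<^sup>L ?M1 (\<lambda>x. 1 - \<phi> x) \<le> exp \<epsilon> * integral\<^sup>L ?M2 (\<lambda>x. 1 - \<phi> x)"
      by (rule ratio_int_le[OF q2 q1 P2 P1 _ r21]) (use phb ph in auto)
    have c1: "integral\<^sup>L ?M1 (\<lambda>x. 1 - \<phi> x) = 1 - integral\<^sup>L ?M1 \<phi>"
      using i1 by (subst Bochner_Integration.integral_diff) (auto simp: P1.prob_space[simplified])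
    have c2: "integral\<^sup>L ?M2 (\<lambda>x. 1 - \<phi> x) = 1 - integral\<^sup>L ?M2 \<phi>"
      using i1 by (subst Bochner_Integration.integral_diff) (auto simp: P2.prob_space[simplified])
    have e1: "1 \<le> exp \<epsilon>" using eps by simp
    have t1: "1 - exp \<epsilon> * u \<le> y"
      using b1 a y e1 by (smt (verit) mult_left_mono)
    have "1 - u \<le> exp \<epsilon> * y" using b2 c1 c2 a y by simp
    then have t2: "exp (- \<epsilon>) * (1 - u) \<le> y"
      by (simp add: exp_minus field_simps)
    have t0: "0 \<le> y" using a2 y by simp
    show "g_eps \<epsilon> u \<le> y" unfolding g_eps_def using t0 t1 t2 by simp
  qed
qed


lemma k_nat:
  fixes c1 c2 :: real
  assumes "(c2 - c1) / (1 - c1) \<in> \<nat>" "c1 < 1" "1 < c2"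
  obtains k :: nat where "2 \<le> k" "c2 - c1 = real k * (1 - c1)"
proof -
  obtain n where n: "(c2 - c1) / (1 - c1) = real n" using assms(1) Nats_cases by metis
  have e: "c2 - c1 = real n * (1 - c1)" using n assms by (simp add: divide_eq_eq)
  have "\<not> real n \<le> 1"
  proof
    assume "real n \<le> 1"
    then have "real n * (1 - c1) \<le> 1 - c1" using assms mult_right_mono[of "real n" 1 "1 - c1"] by simp
    then show False using e assms(3) by linarith
  qed
  then have "real n > 1" by simp
  then have "2 \<le> n" by linarith
  then show ?thesis using e that by blast
qed

lemma g_eps_0: "0 \<le> \<epsilon> \<Longrightarrow> g_eps \<epsilon> 0 = 1"
  unfolding g_eps_def by simp

lemma g_eps_nonneg: "0 \<le> g_eps \<epsilon> x"
  unfolding g_eps_def by simp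

lemma conj01_ge:
  assumes "0 \<le> x" "x \<le> 1"
  shows "x * y - g_eps \<epsilon> x \<le> conj01 (g_eps \<epsilon>) y"
  unfolding conj01_def
proof (rule cSUP_upper)
  show "x \<in> {0..1}" using assms by simp
  show "bdd_above ((\<lambda>x. x * y - g_eps \<epsilon> x) ` {0..1})"
  proof (rule bdd_aboveI2[of _ _ "\<bar>y\<bar>"])
    fix z :: real assume "z \<in> {0..1}"
    then have "z * y \<le> z * \<bar>y\<bar>" by (intro mult_left_mono) auto
    also have "\<dots> \<le> 1 * \<bar>y\<bar>" using \<open>z \<in> {0..1}\<close> by (intro mult_right_mono) auto
    finally have "z * y \<le> \<bar>y\<bar>" by simp
    then show "z * y - g_eps \<epsilon> z \<le> \<bar>y\<bar>" using g_eps_nonneg[of \<epsilon> z] by linarith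
  qed
qed

lemma cE_le_c2:
  fixes c1 c2 \<epsilon> :: real
  assumes c1: "0 \<le> c1" "c1 < 1" and c2: "1 < c2"
    and ratio: "(c2 - c1) / (1 - c1) \<in> \<nat>"
    and eps: "0 \<le> \<epsilon>"
    and beta: "\<exists>\<beta>\<ge>0. 1 + conj01 (g_eps \<epsilon>) (- exp \<beta>)
                 \<le> (c2 - c1 * exp \<beta>) * (1 - c1) / (c2 - c1)"
  shows "c1 * exp \<epsilon> \<le> c2"
proof (rule ccontr)
  assume contra: "\<not> c1 * exp \<epsilon> \<le> c2"
  obtain k :: nat where k: "2 \<le> k" "c2 - c1 = real k * (1 - c1)" using k_nat[OF ratio c1(2) c2] by blast
  obtain \<beta> where b: "\<beta> \<ge> 0" "1 + conj01 (g_eps \<epsilon>) (- exp \<beta>) \<le> (c2 - c1 * exp \<beta>) * (1 - c1) / (c2 - c1)"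
    using beta by blast
  define E where "E = exp \<epsilon>"
  define X where "X = exp \<beta>"
  have E1: "1 \<le> E" and X1: "1 \<le> X" using eps b(1) by (auto simp: E_def X_def)
  have kp: "real k \<ge> 2" using k by simp
  have kk: "(1 - c1) / (c2 - c1) = 1 / real k" unfolding k(2) using c1 by simp
  have rhs: "(c2 - c1 * X) * (1 - c1) / (c2 - c1) = (c2 - c1 * X) / real k"
    using kk by (metis times_divide_eq_right mult.right_neutral)
  have "0 * y - g_eps \<epsilon> 0 \<le> conj01 (g_eps \<epsilon>) (- X)" for y
    using conj01_ge[of 0 "-X" \<epsilon>] by simp
  then have h1: "0 \<le> (c2 - c1 * X) / real k" using b(2) g_eps_0[OF eps] rhs by (simp add: X_def)
  then have "0 \<le> c2 - c1 * X" using kp by (simp add: zero_le_divide_iff)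
  then have h1': "c1 * X \<le> c2" by simp
  define x0 where "x0 = 1 / (1 + E)"
  have x0: "0 \<le> x0" "x0 \<le> 1" using E1 by (auto simp: x0_def)
  have gx0: "g_eps \<epsilon> x0 = 1 / (1 + E)"
  proof -
    have ne: "1 + exp \<epsilon> > 0" using exp_gt_zero[of \<epsilon>] by linarith
    have a1: "1 - exp \<epsilon> * x0 = 1 / (1 + E)" using ne by (simp add: x0_def E_def field_simps)
    have a2: "exp (- \<epsilon>) * (1 - x0) = 1 / (1 + E)" using ne by (simp add: x0_def E_def exp_minus field_simps)
    show ?thesis unfolding g_eps_def a1 a2 using E1 by simp
  qed
  have "x0 * (- X) - g_eps \<epsilon> x0 \<le> conj01 (g_eps \<epsilon>) (- X)" using conj01_ge[OF x0] .
  then have h2: "1 + x0 * (- X) - 1 / (1 + E) \<le> (c2 - c1 * X) / real k"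
    using b(2) rhs gx0 by (simp add: X_def)
  have ne2: "1 + E \<noteq> 0" using E1 by linarith
  have q1: "x0 * (- X) = - (X / (1 + E))" by (simp add: x0_def)
  have q2: "((1 + E) - X - 1) / (1 + E) = (1 + E) / (1 + E) - X / (1 + E) - 1 / (1 + E)"
    by (simp only: diff_divide_distrib)
  have q3: "(1 + E) / (1 + E) = 1" using ne2 by simp
  have "1 + x0 * (- X) - 1 / (1 + E) = ((1 + E) - X - 1) / (1 + E)"
    unfolding q1 q2 q3 by simp
  then have "1 + x0 * (- X) - 1 / (1 + E) = (E - X) / (1 + E)" by simp
  with h2 have "(E - X) / (1 + E) \<le> (c2 - c1 * X) / real k" by simp
  then have Phi: "real k * (E - X) \<le> (c2 - c1 * X) * (1 + E)"
    using E1 kp by (simp add: divide_le_eq le_divide_eq field_simps)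
  define Phi where "Phi = (\<lambda>Y. real k * (E - Y) - (c2 - c1 * Y) * (1 + E))"
  have cE: "c1 * E > c2" using contra by (simp add: E_def)
  have c1p: "c1 > 0" using cE c2 c1(1) by (cases "c1 = 0") auto
  have "c1 * X < c1 * E" using h1' cE by linarith
  then have XE: "X < E" using c1p by simp
  have m2: "c1 * (1 + E) > 2"
  proof -
    have "2 * (1 - c1) \<le> real k * (1 - c1)" using kp c1 by (intro mult_right_mono) auto
    then have "c2 \<ge> c1 + 2 * (1 - c1)" using k by linarith
    then show ?thesis using cE by (simp add: algebra_simps)
  qed
  have P1: "Phi 1 > 0"
  proof -
    have "Phi 1 = real k * (E - 1) - (c2 - c1) * (1 + E)" unfolding Phi_def by simp
    also have "\<dots> = real k * (E - 1) - real k * (1 - c1) * (1 + E)" using k(2) by simp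
    also have "\<dots> = real k * (c1 * (1 + E) - 2)" by (simp add: algebra_simps)
    finally have "Phi 1 = real k * (c1 * (1 + E) - 2)" .
    then show ?thesis using m2 kp by simp
  qed
  have PE: "Phi E > 0" unfolding Phi_def using cE E1 by (simp add: mult_neg_pos)
  have lin: "(E - 1) * Phi X = (E - X) * Phi 1 + (X - 1) * Phi E" unfolding Phi_def by (simp add: algebra_simps)
  have "(E - X) * Phi 1 > 0" using XE P1 by simp
  moreover have "(X - 1) * Phi E \<ge> 0" using X1 PE by simp
  ultimately have "(E - 1) * Phi X > 0" using lin by linarith
  then have "Phi X > 0" using E1 mult_nonneg_nonpos[of "E - 1" "Phi X"] by linarith
  then show False using Phi unfolding Phi_def by simp
qed


locale two_meas =
  fixes P Q :: "'a measure"
  assumes finP: "finite_measure P" and finQ: "finite_measure Q" and sQ: "sets Q = sets P"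
begin

abbreviation "\<mu> \<equiv> sum_meas P Q"
definition "pd x = enn2real (RN_deriv \<mu> P x)"
definition "qd x = enn2real (RN_deriv \<mu> Q x)"

lemma sets_mu[simp]: "sets \<mu> = sets P" and space_mu[simp]: "space \<mu> = space P"
  and emeasure_mu: "A \<in> sets P \<Longrightarrow> emeasure \<mu> A = emeasure P A + emeasure Q A"
  using sum_meas_props[OF finP finQ sQ] by auto

lemma spQ: "space Q = space P" using sQ by (rule sets_eq_imp_space_eq)

lemma fin_mu: "finite_measure \<mu>"
proof (rule finite_measureI)
  have "emeasure \<mu> (space \<mu>) = emeasure P (space P) + emeasure Q (space Q)"
    using emeasure_mu[of "space P"] spQ by simp
  then show "emeasure \<mu> (space \<mu>) \<noteq> \<infinity>"
    using finite_measure.emeasure_finite[OF finP, of "space P"] finite_measure.emeasure_finite[OF finQ, of "space Q"]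
    by (simp add: ennreal_add_eq_top)
qed

sublocale mu: finite_measure \<mu> by (rule fin_mu)

lemma acP: "absolutely_continuous \<mu> P" and acQ: "absolutely_continuous \<mu> Q"
  unfolding absolutely_continuous_def
  by (auto simp: null_sets_def emeasure_mu sQ)

lemma sfP: "sigma_finite_measure P" using finP by (rule finite_measure.axioms(1))
lemma sfQ: "sigma_finite_measure Q" using finQ by (rule finite_measure.axioms(1))

lemma pd_nonneg: "0 \<le> pd x" and qd_nonneg: "0 \<le> qd x"
  by (auto simp: pd_def qd_def)

lemma pd_meas[measurable]: "pd \<in> borel_measurable \<mu>" and qd_meas[measurable]: "qd \<in> borel_measurable \<mu>"
  unfolding pd_def qd_def by auto

lemma pd_int: "B \<in> sets P \<Longrightarrow> integrable \<mu> (\<lambda>x. pd x * indicator B x)"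
  and pd_set: "B \<in> sets P \<Longrightarrow> (\<integral>x. pd x * indicator B x \<partial>\<mu>) = measure P B"
proof -
  assume B: "B \<in> sets P"
  have Bm: "indicator B \<in> borel_measurable \<mu>" using B by (intro borel_measurable_indicator) simp
  have i: "integrable P (indicator B :: _ \<Rightarrow> real)"
    using B finite_measure.emeasure_finite[OF finP, of B] by (simp add: less_top)
  show "integrable \<mu> (\<lambda>x. pd x * indicator B x)"
    using mu.RN_deriv_integrable[OF sfP acP _ Bm] i B unfolding pd_def by simp
  have "integral\<^sup>L P (indicator B) = (\<integral>x. pd x * indicator B x \<partial>\<mu>)"
    using mu.RN_deriv_integral[OF sfP acP _ Bm] B unfolding pd_def by simp
  then show "(\<integral>x. pd x * indicator B x \<partial>\<mu>) = measure P B"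
    using B sets.sets_into_space[OF B] by (simp add: Int_absorb2)
qed

lemma qd_int: "B \<in> sets P \<Longrightarrow> integrable \<mu> (\<lambda>x. qd x * indicator B x)"
  and qd_set: "B \<in> sets P \<Longrightarrow> (\<integral>x. qd x * indicator B x \<partial>\<mu>) = measure Q B"
proof -
  assume B: "B \<in> sets P"
  have Bm: "indicator B \<in> borel_measurable \<mu>" using B by (intro borel_measurable_indicator) simp
  have i: "integrable Q (indicator B :: _ \<Rightarrow> real)"
    using B finite_measure.emeasure_finite[OF finQ, of B] sQ by (simp add: less_top)
  show "integrable \<mu> (\<lambda>x. qd x * indicator B x)"
    using mu.RN_deriv_integrable[OF sfQ acQ _ Bm] i B sQ unfolding qd_def by simp
  have "integral\<^sup>L Q (indicator B) = (\<integral>x. qd x * indicator B x \<partial>\<mu>)"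
    using mu.RN_deriv_integral[OF sfQ acQ _ Bm] B sQ unfolding qd_def by simp
  then show "(\<integral>x. qd x * indicator B x \<partial>\<mu>) = measure Q B"
    using B sets.sets_into_space[OF B] spQ by (simp add: Int_absorb2)
qed

lemma fdiv_eint: "fdiv f P Q = eint \<mu> (\<lambda>x. f_persp f (pd x) (qd x))"
  unfolding fdiv_def Let_def eint_def pd_def qd_def ..

lemma fdiv_ge_two:
  assumes cf: "convex_on {0<..} f"
    and m1: "\<And>t. 0 < t \<Longrightarrow> \<alpha>1 * t + \<gamma>1 \<le> f t"
    and m2: "\<And>t. 0 < t \<Longrightarrow> \<alpha>2 * t + \<gamma>2 \<le> f t"
    and A: "A \<in> sets P"
  shows "ereal (\<alpha>2 * measure P A + \<gamma>2 * measure Q A + \<alpha>1 * measure P (space P - A) + \<gamma>1 * measure Q (space P - A))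
           \<le> fdiv f P Q"
proof -
  have Ac: "space P - A \<in> sets P" using A by auto
  define \<phi> where "\<phi> x = \<alpha>2 * (pd x * indicator A x) + \<gamma>2 * (qd x * indicator A x)
     + \<alpha>1 * (pd x * indicator (space P - A) x) + \<gamma>1 * (qd x * indicator (space P - A) x)" for x
  have int: "integrable \<mu> \<phi>" unfolding \<phi>_def
    using pd_int[OF A] qd_int[OF A] pd_int[OF Ac] qd_int[OF Ac] by auto
  have "integral\<^sup>L \<mu> \<phi> = \<alpha>2 * measure P A + \<gamma>2 * measure Q A + \<alpha>1 * measure P (space P - A) + \<gamma>1 * measure Q (space P - A)"
    unfolding \<phi>_def
    using pd_int[OF A] qd_int[OF A] pd_int[OF Ac] qd_int[OF Ac] pd_set[OF A] qd_set[OF A] pd_set[OF Ac] qd_set[OF Ac]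
    by (simp add: Bochner_Integration.integral_add)
  moreover have "AE x in \<mu>. ereal (\<phi> x) \<le> f_persp f (pd x) (qd x)"
  proof (rule AE_I2)
    fix x assume x: "x \<in> space \<mu>"
    show "ereal (\<phi> x) \<le> f_persp f (pd x) (qd x)"
    proof (cases "x \<in> A")
      case True
      then have "\<phi> x = \<alpha>2 * pd x + \<gamma>2 * qd x" unfolding \<phi>_def by simp
      then show ?thesis using persp_ge[OF cf m2 pd_nonneg qd_nonneg] by simp
    next
      case False
      then have "\<phi> x = \<alpha>1 * pd x + \<gamma>1 * qd x" using x unfolding \<phi>_def by simp
      then show ?thesis using persp_ge[OF cf m1 pd_nonneg qd_nonneg] by simp
    qed
  qed
  ultimately show ?thesis
    using eint_ge[OF int] fdiv_eint by metis
qed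

lemma AE_le_from_set:
  fixes g :: "'a \<Rightarrow> real"
  assumes g: "integrable \<mu> g" and le: "\<And>B. B \<in> sets P \<Longrightarrow> (\<integral>x. g x * indicator B x \<partial>\<mu>) \<le> 0"
  shows "AE x in \<mu>. g x \<le> 0"
proof -
  define B where "B = {x \<in> space \<mu>. 0 < g x}"
  have gm[measurable]: "g \<in> borel_measurable \<mu>" using g by auto
  have "B \<in> sets \<mu>" unfolding B_def by measurable
  then have B: "B \<in> sets P" by simp
  have ig: "integrable \<mu> (\<lambda>x. g x * indicator B x)"
    using g B by (intro integrable_real_mult_indicator) auto
  have nn: "AE x in \<mu>. 0 \<le> g x * indicator B x" by (auto simp: B_def indicator_def)
  have "0 \<le> (\<integral>x. g x * indicator B x \<partial>\<mu>)" using nn by (rule integral_nonneg_AE)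
  then have "(\<integral>x. g x * indicator B x \<partial>\<mu>) = 0" using le[OF B] by simp
  then have "AE x in \<mu>. g x * indicator B x = 0" using integral_nonneg_eq_0_iff_AE[OF ig nn] by simp
  with AE_space show ?thesis by eventually_elim (auto simp: B_def indicator_def split: if_splits)
qed

lemma fdiv_le_aff:
  assumes r2: "\<And>B. B \<in> sets P \<Longrightarrow> measure P B \<le> r2 * measure Q B"
    and r1: "\<And>B. B \<in> sets P \<Longrightarrow> r1 * measure Q B \<le> measure P B"
    and pw: "\<And>a b. 0 \<le> a \<Longrightarrow> 0 \<le> b \<Longrightarrow> r1 * b \<le> a \<Longrightarrow> a \<le> r2 * b \<Longrightarrow> f_persp f a b \<le> ereal (\<alpha> * a + \<gamma> * b)"
  shows "fdiv f P Q \<le> ereal (\<alpha> * measure P (space P) + \<gamma> * measure Q (space P))"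
proof -
  have SP: "space P \<in> sets P" by simp
  have ip: "integrable \<mu> pd"
    using Bochner_Integration.integrable_cong[of \<mu> \<mu> "\<lambda>x. pd x * indicator (space P) x" pd] pd_int[OF SP] by simp
  have iq: "integrable \<mu> qd"
    using Bochner_Integration.integrable_cong[of \<mu> \<mu> "\<lambda>x. qd x * indicator (space P) x" qd] qd_int[OF SP] by simp
  have ipB: "\<And>B. B \<in> sets P \<Longrightarrow> (\<integral>x. (c * pd x + d * qd x) * indicator B x \<partial>\<mu>) = c * measure P B + d * measure Q B" for c d
  proof -
    fix B assume B: "B \<in> sets P"
    have "(\<integral>x. (c * pd x + d * qd x) * indicator B x \<partial>\<mu>) = (\<integral>x. c * (pd x * indicator B x) + d * (qd x * indicator B x) \<partial>\<mu>)"
      by (simp add: algebra_simps)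
    also have "\<dots> = c * measure P B + d * measure Q B"
      using pd_int[OF B] qd_int[OF B] pd_set[OF B] qd_set[OF B] by simp
    finally show "(\<integral>x. (c * pd x + d * qd x) * indicator B x \<partial>\<mu>) = c * measure P B + d * measure Q B" .
  qed
  have ae2: "AE x in \<mu>. (1 * pd x + (- r2) * qd x) \<le> 0"
  proof (rule AE_le_from_set)
    show "integrable \<mu> (\<lambda>x. 1 * pd x + - r2 * qd x)" using ip iq by auto
    fix B assume B: "B \<in> sets P"
    show "(\<integral>x. (1 * pd x + - r2 * qd x) * indicator B x \<partial>\<mu>) \<le> 0"
      using ipB[OF B, of 1 "- r2"] r2[OF B] by linarith
  qed
  have ae1: "AE x in \<mu>. ((- 1) * pd x + r1 * qd x) \<le> 0"
  proof (rule AE_le_from_set)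
    show "integrable \<mu> (\<lambda>x. (- 1) * pd x + r1 * qd x)" using ip iq by auto
    fix B assume B: "B \<in> sets P"
    show "(\<integral>x. ((- 1) * pd x + r1 * qd x) * indicator B x \<partial>\<mu>) \<le> 0"
      using ipB[OF B, of "- 1" r1] r1[OF B] by linarith
  qed
  have int: "integrable \<mu> (\<lambda>x. \<alpha> * pd x + \<gamma> * qd x)" using ip iq by auto
  have "AE x in \<mu>. f_persp f (pd x) (qd x) \<le> ereal (\<alpha> * pd x + \<gamma> * qd x)"
    using ae1 ae2 by eventually_elim (rule pw, auto simp: pd_nonneg qd_nonneg)
  then have "fdiv f P Q \<le> ereal (integral\<^sup>L \<mu> (\<lambda>x. \<alpha> * pd x + \<gamma> * qd x))"
    unfolding fdiv_eint by (rule eint_le[OF int])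
  also have "integral\<^sup>L \<mu> (\<lambda>x. \<alpha> * pd x + \<gamma> * qd x) = \<alpha> * measure P (space P) + \<gamma> * measure Q (space P)"
    using ipB[OF SP, of \<alpha> \<gamma>]
      Bochner_Integration.integral_cong[of \<mu> \<mu> "\<lambda>x. (\<alpha> * pd x + \<gamma> * qd x) * indicator (space P) x" "\<lambda>x. \<alpha> * pd x + \<gamma> * qd x"]
    by simp
  finally show ?thesis .
qed

end


lemma hyperplane_null:
  fixes b :: "'a::euclidean_space"
  assumes "b \<noteq> 0"
  shows "{x. x \<bullet> b = t} \<in> null_sets lborel"
proof -
  have "negligible {x. b \<bullet> x = t}" using assms by (intro negligible_hyperplane) auto
  then have "{x. b \<bullet> x = t} \<in> null_sets lebesgue" by (simp add: negligible_iff_null_sets)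
  moreover have "{x. b \<bullet> x = t} \<in> sets lborel" by simp
  ultimately have "{x. b \<bullet> x = t} \<in> null_sets lborel" using null_sets_completion_iff by blast
  then show ?thesis by (simp add: inner_commute)
qed

lemma value_exists:
  fixes F :: "real \<Rightarrow> real"
  assumes c: "\<And>x. isCont F x" and bot: "(F \<longlongrightarrow> 0) at_bot" and top: "(F \<longlongrightarrow> 1) at_top"
    and y: "0 < y" "y < 1"
  shows "\<exists>t. F t = y"
proof -
  have "\<forall>\<^sub>F t in at_bot. F t < y" using order_tendstoD(2)[OF bot y(1)] .
  then obtain a where a: "\<And>t. t \<le> a \<Longrightarrow> F t < y" unfolding eventually_at_bot_linorder by blast
  have "\<forall>\<^sub>F t in at_top. y < F t" using order_tendstoD(1)[OF top y(2)] .
  then obtain b where b: "\<And>t. t \<ge> b \<Longrightarrow> y < F t" unfolding eventually_at_top_linorder by blast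
  define b' where "b' = max a b"
  have "F a \<le> y" "y \<le> F b'" "a \<le> b'" using a[of a] b[of b'] by (auto simp: b'_def)
  moreover have "continuous_on {a..b'} F" using c by (intro continuous_at_imp_continuous_on) auto
  ultimately show ?thesis using IVT'[of F a y b'] by blast
qed

lemma partition_exists:
  fixes h :: "'a::euclidean_space \<Rightarrow> real" and k :: nat
  assumes h: "is_density h" and k: "2 \<le> k"
  obtains A :: "nat \<Rightarrow> 'a set" where "\<And>i. A i \<in> sets borel"
    "\<And>i j. i < k \<Longrightarrow> j < k \<Longrightarrow> i \<noteq> j \<Longrightarrow> A i \<inter> A j = {}"
    "\<And>i. i < k \<Longrightarrow> measure (density lborel (\<lambda>x. ennreal (h x))) (A i) = 1 / k"
proof -
  let ?H = "density lborel (\<lambda>x. ennreal (h x))"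
  have hm[measurable]: "h \<in> borel_measurable borel" and h0: "\<And>x. 0 \<le> h x" and h1: "(\<integral>\<^sup>+ x. ennreal (h x) \<partial>lborel) = 1"
    using h unfolding is_density_def by auto
  have "emeasure ?H (space ?H) = 1" by (subst emeasure_density) (auto simp: h1)
  then interpret H: prob_space ?H by (intro prob_spaceI)
  obtain b :: 'a where b: "b \<in> Basis" using nonempty_Basis by blast
  then have b0: "b \<noteq> 0" by auto
  define X where "X x = x \<bullet> b" for x :: 'a
  have Xm[measurable]: "X \<in> borel_measurable ?H" unfolding X_def by simp
  define M where "M = distr ?H borel X"
  interpret M: real_distribution M unfolding M_def by (intro H.real_distribution_distr) simp
  define F where "F = cdf M"
  have atom: "measure M {t} = 0" for t
  proof -
    have "measure M {t} = measure ?H (X -` {t} \<inter> space ?H)" unfolding M_def by (rule measure_distr) auto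
    also have "X -` {t} \<inter> space ?H = {x. x \<bullet> b = t}" by (auto simp: X_def)
    also have "{x. x \<bullet> b = t} \<in> null_sets ?H"
      using absolutely_continuousI_density[of "\<lambda>x. ennreal (h x)" lborel] hyperplane_null[OF b0, of t]
      unfolding absolutely_continuous_def by auto
    then have "emeasure ?H {x. x \<bullet> b = t} = 0" by (rule null_setsD1)
    then have "measure ?H {x. x \<bullet> b = t} = 0" by (simp add: measure_def)
    finally show ?thesis .
  qed
  have cont: "isCont F x" for x unfolding F_def using M.isCont_cdf atom by simp
  have bot: "(F \<longlongrightarrow> 0) at_bot" unfolding F_def by (rule M.cdf_lim_at_bot)
  have top: "(F \<longlongrightarrow> 1) at_top" unfolding F_def by (rule M.cdf_lim_at_top_prob)
  define t where "t j = (SOME s. F s = real j / real k)" for j :: nat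
  have Ft: "F (t j) = real j / real k" if "1 \<le> j" "j < k" for j
  proof -
    have "0 < real j / real k" "real j / real k < 1" using that by auto
    then have "\<exists>s. F s = real j / real k" by (intro value_exists[OF cont bot top])
    then show ?thesis unfolding t_def by (rule someI_ex)
  qed
  have tmono: "t i \<le> t j" if "1 \<le> i" "i \<le> j" "j < k" for i j
  proof (rule ccontr)
    assume "\<not> t i \<le> t j"
    then have "F (t j) \<le> F (t i)" unfolding F_def by (intro M.cdf_nondecreasing) auto
    moreover have "real i / real k < real j / real k" if "i < j" using that k by (simp add: divide_strict_right_mono)
    ultimately show False using Ft[of i] Ft[of j] that \<open>\<not> t i \<le> t j\<close> by (cases "i = j") auto
  qed
  define I where "I i = {s. (i = 0 \<or> t i < s) \<and> (Suc i = k \<or> s \<le> t (Suc i))}" for i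
  define A where "A i = X -` I i" for i
  have Ib: "I i \<in> sets borel" for i
  proof -
    have "I i = (if i = 0 then UNIV else {t i<..}) \<inter> (if Suc i = k then UNIV else {..t (Suc i)})"
      by (auto simp: I_def)
    then show ?thesis by simp
  qed
  show ?thesis
  proof
    fix i
    have Xb: "X \<in> borel_measurable borel" unfolding X_def by simp
    show "A i \<in> sets borel" unfolding A_def using measurable_sets[OF Xb Ib[of i]] by simp
  next
    fix i j assume ij: "i < k" "j < k" "i \<noteq> j"
    show "A i \<inter> A j = {}"
    proof (cases "i < j")
      case True
      have "t (Suc i) \<le> t j" using True ij by (intro tmono) auto
      then show ?thesis using True ij by (auto simp: A_def I_def)
    next
      case False
      then have "j < i" using ij by simp
      then have "t (Suc j) \<le> t i" using ij by (intro tmono) auto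
      then show ?thesis using \<open>j < i\<close> ij by (auto simp: A_def I_def)
    qed
  next
    fix i assume i: "i < k"
    have "measure ?H (A i) = measure M (I i)"
      unfolding M_def A_def using Ib by (subst measure_distr) auto
    also have "\<dots> = 1 / real k"
    proof -
      consider "i = 0" | "0 < i" "Suc i < k" | "0 < i" "Suc i = k" using i by linarith
      then show ?thesis
      proof cases
        case 1
        then have "I i = {..t 1}" using k i by (auto simp: I_def)
        moreover have "Suc 0 \<noteq> k" using 1 i k by auto
        ultimately show ?thesis using Ft[of 1] 1 k i by (auto simp: F_def cdf_def)
      next
        case 2
        have tt: "t i < t (Suc i)"
        proof -
          have "F (t i) < F (t (Suc i))" using Ft[of i] Ft[of "Suc i"] 2 k by (simp add: divide_strict_right_mono)
          then show ?thesis unfolding F_def using M.cdf_nondecreasing by (meson not_le)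
        qed
        have "I i = {t i<..t (Suc i)}" using 2 by (auto simp: I_def)
        then have "measure M (I i) = F (t (Suc i)) - F (t i)" unfolding F_def using M.cdf_diff_eq[OF tt] by simp
        also have "\<dots> = 1 / real k" using Ft[of i] Ft[of "Suc i"] 2 by (simp add: field_simps)
        finally show ?thesis .
      next
        case 3
        have "I i = UNIV - {..t i}" using 3 by (auto simp: I_def)
        then have "measure M (I i) = 1 - F (t i)"
          unfolding F_def cdf_def using M.prob_compl[of "{..t i}"] by simp
        also have "\<dots> = 1 / real k" using Ft[of i] 3 by (simp add: field_simps)
        finally show ?thesis .
      qed
    qed
    finally show "measure ?H (A i) = 1 / real k" .
  qed
qed


lemma params:
  fixes c1 c2 E :: real and k :: nat
  assumes c1: "0 \<le> c1" "c1 < 1" and c2: "1 < c2" and k: "c2 - c1 = real k * (1 - c1)" "2 \<le> k"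
    and E: "1 \<le> E" and cE: "c1 * E \<le> c2"
  defines "D \<equiv> (1 - c1) * E + c2 - 1"
  defines "lam \<equiv> (E - 1) / D"
  defines "r1 \<equiv> c1 * (D / (c2 - c1))"
  defines "r2 \<equiv> c2 / (c2 - c1) * (D / E)"
  defines "a \<equiv> E * (1 - c1) / D"
  shows "0 < D" "0 \<le> lam" "lam \<le> 1" "r2 * lam \<le> 1" "r1 * lam \<le> 1"
    "r2 * (1 - lam) = c2 * (1 - r2 * lam)" "r1 * (1 - lam) = c1 * (1 - r1 * lam)"
    "a * r2 = c2 / real k" "(1 - a) * r1 = c1 * (real k - 1) / real k"
    "0 < a" "a < 1" "a * r2 + (1 - a) * r1 = 1" "0 \<le> r1" "0 < r2" "r1 \<le> r2"
    "a = E / (real k - 1 + E)" "lam * c2 + (1 - lam) = E * (lam * c1 + (1 - lam))"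
proof -
  have E0: "0 < E" using E by simp
  have kk: "real k \<ge> 2" using k by simp
  have d: "c2 - c1 > 0" using c1 c2 by simp
  show D: "0 < D" unfolding D_def using c1 c2 E by (smt (verit) mult_nonneg_nonneg)
  show "0 \<le> lam" unfolding lam_def using D E by simp
  have "E - 1 \<le> D" unfolding D_def using cE c1 by (simp add: algebra_simps)
  then show "lam \<le> 1" unfolding lam_def using D by simp
  have r2lam: "r2 * lam = c2 * (E - 1) / (E * (c2 - c1))"
    unfolding r2_def lam_def using D E0 d by (simp add: field_simps)
  have r1lam: "r1 * lam = c1 * (E - 1) / (c2 - c1)"
    unfolding r1_def lam_def using D E0 d by (simp add: field_simps)
  have "c2 * (E - 1) \<le> E * (c2 - c1)" using cE by (simp add: algebra_simps)
  then show "r2 * lam \<le> 1" unfolding r2lam using E0 d by (simp add: divide_le_eq)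
  have "c1 * (E - 1) \<le> c2 - c1" using cE by (simp add: algebra_simps)
  then show "r1 * lam \<le> 1" unfolding r1lam using d by (simp add: divide_le_eq)
  have p: "(E - 1) * c2 + D - (E - 1) = E * (c2 - c1)" unfolding D_def by (simp add: algebra_simps)
  have m0: "lam * c2 + (1 - lam) = ((E - 1) * c2 + D - (E - 1)) / D"
    unfolding lam_def using D by (simp add: field_simps)
  have m: "r2 * (lam * c2 + (1 - lam)) = c2"
    unfolding m0 p unfolding r2_def using D E0 d by (simp add: field_simps)
  have "r2 * (1 - lam) = r2 * (lam * c2 + (1 - lam)) - r2 * lam * c2" by (simp add: algebra_simps)
  also have "\<dots> = c2 - r2 * lam * c2" using m by simp
  also have "\<dots> = c2 * (1 - r2 * lam)" by (simp add: algebra_simps)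
  finally show "r2 * (1 - lam) = c2 * (1 - r2 * lam)" .
  have p1: "(E - 1) * c1 + D - (E - 1) = c2 - c1" unfolding D_def by (simp add: algebra_simps)
  have m1: "lam * c1 + (1 - lam) = ((E - 1) * c1 + D - (E - 1)) / D"
    unfolding lam_def using D by (simp add: field_simps)
  have mm: "r1 * (lam * c1 + (1 - lam)) = c1"
    unfolding m1 p1 unfolding r1_def using D E0 d by (simp add: field_simps)
  have "r1 * (1 - lam) = r1 * (lam * c1 + (1 - lam)) - r1 * lam * c1" by (simp add: algebra_simps)
  also have "\<dots> = c1 - r1 * lam * c1" using mm by simp
  also have "\<dots> = c1 * (1 - r1 * lam)" by (simp add: algebra_simps)
  finally show "r1 * (1 - lam) = c1 * (1 - r1 * lam)" .
  have ar2: "a * r2 = c2 * (1 - c1) / (c2 - c1)"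
    unfolding a_def r2_def using D E0 d by (simp add: field_simps)
  show ar2': "a * r2 = c2 / real k" unfolding ar2 k(1) using c1 by simp
  have oma: "1 - a = (c2 - 1) / D" unfolding a_def using D by (simp add: field_simps D_def)
  have ar1: "(1 - a) * r1 = c1 * (c2 - 1) / (c2 - c1)"
    unfolding r1_def oma using D d by (simp add: field_simps)
  have "c2 - 1 = (real k - 1) * (1 - c1)" using k(1) by (simp add: algebra_simps)
  then show ar1': "(1 - a) * r1 = c1 * (real k - 1) / real k" unfolding ar1 k(1) using c1 by simp
  show "0 < a" unfolding a_def using D E0 c1 by simp
  show "a < 1" unfolding a_def using D E0 c1 c2 by (simp add: divide_less_eq D_def)
  show "a * r2 + (1 - a) * r1 = 1" unfolding ar2' ar1'
  proof -
    have "c2 = c1 + real k * (1 - c1)" using k(1) by simp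
    then have "c2 + c1 * (real k - 1) = real k" by (simp add: algebra_simps)
    then show "c2 / real k + c1 * (real k - 1) / real k = 1" using kk by (simp add: add_divide_distrib[symmetric])
  qed
  show "0 \<le> r1" unfolding r1_def using c1 D d by simp
  show "0 < r2" unfolding r2_def using c2 D d E0 by simp
  have "r1 * E \<le> r2 * E"
  proof -
    have "r1 * E = c1 * E * (D / (c2 - c1))" unfolding r1_def by simp
    also have "\<dots> \<le> c2 * (D / (c2 - c1))" using cE D d by (intro mult_right_mono) auto
    also have "\<dots> = r2 * E" unfolding r2_def using E0 by simp
    finally show ?thesis .
  qed
  then show "r1 \<le> r2" using E0 by simp
  have "real k - 1 + E = D / (1 - c1)"
  proof -
    have "c2 - 1 = (real k - 1) * (1 - c1)" using k(1) by (simp add: algebra_simps)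
    then have "D = (real k - 1 + E) * (1 - c1)" unfolding D_def by (simp add: algebra_simps)
    then show ?thesis using c1 by simp
  qed
  then show "a = E / (real k - 1 + E)" unfolding a_def using c1 by simp
  show "lam * c2 + (1 - lam) = E * (lam * c1 + (1 - lam))"
    unfolding m0 m1 p p1 by simp
qed


lemma Pclass_elim:
  assumes "P \<in> Pclass c1 c2 h"
  obtains p where "P = density lborel (\<lambda>x. ennreal (p x))" "is_density p" "\<forall>x. c1 * h x \<le> p x" "\<forall>x. p x \<le> c2 * h x"
  using assms unfolding Pclass_def by blast

lemma Qfun_sampler:
  fixes h :: "'a::euclidean_space \<Rightarrow> real"
  assumes h: "is_density h" and lam: "0 \<le> lam" "lam \<le> 1" and eps: "0 \<le> \<epsilon>"
    and key: "lam * c2 + (1 - lam) = exp \<epsilon> * (lam * c1 + (1 - lam))"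
  shows "Qfun lam h \<in> samplers (Pclass c1 c2 h) (g_eps \<epsilon>)"
proof -
  have hm: "h \<in> borel_measurable borel" and h0: "\<And>x. 0 \<le> h x" using h unfolding is_density_def by auto
  have props: "Qfun lam h P = density lborel (\<lambda>x. ennreal (lam * p x + (1 - lam) * h x))
      \<and> prob_space (density lborel (\<lambda>x. ennreal (lam * p x + (1 - lam) * h x)))"
    if "P = density lborel (\<lambda>x. ennreal (p x))" "is_density p" for P p
    using Qfun_eq[OF that(2) h lam] that(1) by simp
  have bnd: "lam * p' x + (1 - lam) * h x \<le> exp \<epsilon> * (lam * p x + (1 - lam) * h x)"
    if "\<And>x. c1 * h x \<le> p x" "\<And>x. p' x \<le> c2 * h x" for p p' x
  proof -
    have "lam * p' x + (1 - lam) * h x \<le> lam * (c2 * h x) + (1 - lam) * h x"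
      using that(2)[of x] lam by (simp add: mult_left_mono)
    also have "\<dots> = (lam * c2 + (1 - lam)) * h x" by (simp add: algebra_simps)
    also have "\<dots> = exp \<epsilon> * ((lam * c1 + (1 - lam)) * h x)" unfolding key by simp
    also have "(lam * c1 + (1 - lam)) * h x = lam * (c1 * h x) + (1 - lam) * h x" by (simp add: algebra_simps)
    also have "exp \<epsilon> * \<dots> \<le> exp \<epsilon> * (lam * p x + (1 - lam) * h x)"
      using that(1)[of x] lam by (intro mult_left_mono add_right_mono) (auto simp: mult_left_mono)
    finally show ?thesis .
  qed
  show ?thesis
    unfolding samplers_def is_sampler_def fldp_def
  proof (intro CollectI conjI ballI)
    fix P assume "P \<in> Pclass c1 c2 h"
    then obtain p where P: "P = density lborel (\<lambda>x. ennreal (p x))" "is_density p" by (rule Pclass_elim)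
    show "prob_space (Qfun lam h P)" using props[OF P] by simp
    show "sets (Qfun lam h P) = sets borel" unfolding Qfun_def by simp
  next
    fix P P' and u :: real assume PP: "P \<in> Pclass c1 c2 h" "P' \<in> Pclass c1 c2 h" and u: "u \<in> {0..1}"
    obtain p where P: "P = density lborel (\<lambda>x. ennreal (p x))" "is_density p" "\<forall>x. c1 * h x \<le> p x" "\<forall>x. p x \<le> c2 * h x"
      using PP(1) by (rule Pclass_elim)
    obtain p' where P': "P' = density lborel (\<lambda>x. ennreal (p' x))" "is_density p'" "\<forall>x. c1 * h x \<le> p' x" "\<forall>x. p' x \<le> c2 * h x"
      using PP(2) by (rule Pclass_elim)
    have pm: "p \<in> borel_measurable borel" "\<And>x. 0 \<le> p x" using P(2) unfolding is_density_def by auto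
    have pm': "p' \<in> borel_measurable borel" "\<And>x. 0 \<le> p' x" using P'(2) unfolding is_density_def by auto
    show "g_eps \<epsilon> u \<le> tradeoff (Qfun lam h P) (Qfun lam h P') u"
      unfolding conjunct1[OF props[OF P(1,2)]] conjunct1[OF props[OF P'(1,2)]]
    proof (rule tradeoff_ge)
      show "(\<lambda>x. lam * p x + (1 - lam) * h x) \<in> borel_measurable borel" using pm hm by simp
      show "(\<lambda>x. lam * p' x + (1 - lam) * h x) \<in> borel_measurable borel" using pm' hm by simp
      show "\<And>x. 0 \<le> lam * p x + (1 - lam) * h x" using pm h0 lam by simp
      show "\<And>x. 0 \<le> lam * p' x + (1 - lam) * h x" using pm' h0 lam by simp
      show "prob_space (density lborel (\<lambda>x. ennreal (lam * p x + (1 - lam) * h x)))" using props[OF P(1,2)] by simp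
      show "prob_space (density lborel (\<lambda>x. ennreal (lam * p' x + (1 - lam) * h x)))" using props[OF P'(1,2)] by simp
      show "0 \<le> \<epsilon>" by fact
      show "\<And>x. lam * p' x + (1 - lam) * h x \<le> exp \<epsilon> * (lam * p x + (1 - lam) * h x)" by (rule bnd[OF P(3)[rule_format] P'(4)[rule_format]])
      show "\<And>x. lam * p x + (1 - lam) * h x \<le> exp \<epsilon> * (lam * p' x + (1 - lam) * h x)" by (rule bnd[OF P'(3)[rule_format] P(4)[rule_format]])
      show "0 \<le> u" "u \<le> 1" using u by auto
    qed
  qed
qed

lemma dens_measure_le:
  fixes u v :: "'a::euclidean_space \<Rightarrow> real"
  assumes um: "u \<in> borel_measurable borel" and vm: "v \<in> borel_measurable borel"
    and u0: "\<And>x. 0 \<le> u x" and v0: "\<And>x. 0 \<le> v x" and c: "0 \<le> c" and le: "\<And>x. u x \<le> c * v x"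
    and fin: "prob_space (density lborel (\<lambda>x. ennreal (v x)))" and B: "B \<in> sets borel"
  shows "measure (density lborel (\<lambda>x. ennreal (u x))) B \<le> c * measure (density lborel (\<lambda>x. ennreal (v x))) B"
proof -
  note [measurable] = um vm
  interpret V: prob_space "density lborel (\<lambda>x. ennreal (v x))" by fact
  have "emeasure (density lborel (\<lambda>x. ennreal (u x))) B = (\<integral>\<^sup>+ x. ennreal (u x) * indicator B x \<partial>lborel)"
    using B by (subst emeasure_density) auto
  also have "\<dots> \<le> (\<integral>\<^sup>+ x. ennreal c * (ennreal (v x) * indicator B x) \<partial>lborel)"
  proof (intro nn_integral_mono)
    fix x
    have "ennreal (u x) \<le> ennreal c * ennreal (v x)" using le[of x] c v0[of x] by (simp add: ennreal_mult[symmetric] ennreal_leI)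
    then show "ennreal (u x) * indicator B x \<le> ennreal c * (ennreal (v x) * indicator B x)"
      by (auto simp: indicator_def)
  qed
  also have "\<dots> = ennreal c * emeasure (density lborel (\<lambda>x. ennreal (v x))) B"
    using B by (subst emeasure_density) (auto simp: nn_integral_cmult)
  finally have le2: "emeasure (density lborel (\<lambda>x. ennreal (u x))) B \<le> ennreal c * emeasure (density lborel (\<lambda>x. ennreal (v x))) B" .
  have "measure (density lborel (\<lambda>x. ennreal (u x))) B \<le> enn2real (ennreal c * emeasure (density lborel (\<lambda>x. ennreal (v x))) B)"
  proof -
    have vf: "emeasure (density lborel (\<lambda>x. ennreal (v x))) B < \<top>" by (rule V.emeasure_finite[THEN less_top[THEN iffD1]])
    have "ennreal c * emeasure (density lborel (\<lambda>x. ennreal (v x))) B < \<top>" using vf by (simp add: ennreal_mult_less_top)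
    then show ?thesis unfolding measure_def using le2 by (intro enn2real_mono) auto
  qed
  also have "\<dots> = c * measure (density lborel (\<lambda>x. ennreal (v x))) B"
    using c by (simp add: enn2real_mult measure_def)
  finally show ?thesis .
qed

lemma upper_generic:
  assumes tm: "two_meas P Q" and PP: "prob_space P" and PQ: "prob_space Q"
    and r2: "\<And>B. B \<in> sets P \<Longrightarrow> measure P B \<le> r2 * measure Q B"
    and r1: "\<And>B. B \<in> sets P \<Longrightarrow> r1 * measure Q B \<le> measure P B"
    and r: "0 \<le> r1" "r1 < r2"
    and chord: "\<And>t. 0 < t \<Longrightarrow> r1 \<le> t \<Longrightarrow> t \<le> r2 \<Longrightarrow> f t \<le> ((r2 - t) * F1 + (t - r1) * f r2) / (r2 - r1)"
    and zero: "r1 = 0 \<Longrightarrow> f_zero f = ereal F1"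
  shows "fdiv f P Q \<le> ereal (((1 - r1) * f r2 + (r2 - 1) * F1) / (r2 - r1))"
proof -
  interpret two_meas P Q by fact
  define \<alpha> where "\<alpha> = (f r2 - F1) / (r2 - r1)"
  define \<gamma> where "\<gamma> = (r2 * F1 - r1 * f r2) / (r2 - r1)"
  have lin: "\<alpha> * t + \<gamma> = ((r2 - t) * F1 + (t - r1) * f r2) / (r2 - r1)" for t
  proof -
    have "\<alpha> * t + \<gamma> = ((f r2 - F1) * t + (r2 * F1 - r1 * f r2)) / (r2 - r1)"
      unfolding \<alpha>_def \<gamma>_def by (simp add: add_divide_distrib)
    also have "(f r2 - F1) * t + (r2 * F1 - r1 * f r2) = (r2 - t) * F1 + (t - r1) * f r2" by (simp add: algebra_simps)
    finally show ?thesis .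
  qed
  have "fdiv f P Q \<le> ereal (\<alpha> * measure P (space P) + \<gamma> * measure Q (space P))"
  proof (rule fdiv_le_aff[OF r2 r1])
    fix a b :: real assume ab: "0 \<le> a" "0 \<le> b" "r1 * b \<le> a" "a \<le> r2 * b"
    consider "0 < a" "0 < b" | "a = 0" "0 < b" | "b = 0" using ab by linarith
    then show "f_persp f a b \<le> ereal (\<alpha> * a + \<gamma> * b)"
    proof cases
      case 1
      have t: "r1 \<le> a / b" "a / b \<le> r2" using ab 1 by (auto simp: field_simps)
      have "f (a / b) \<le> \<alpha> * (a / b) + \<gamma>" unfolding lin using chord[OF _ t] 1 by simp
      then have "b * f (a / b) \<le> b * (\<alpha> * (a / b) + \<gamma>)" using 1 by (intro mult_left_mono) auto
      also have "\<dots> = \<alpha> * a + \<gamma> * b" using 1 by (simp add: field_simps)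
      finally show ?thesis using 1 by (simp add: f_persp_def)
    next
      case 2
      then have "r1 = 0" using ab r by (smt (verit) mult_pos_pos)
      then have "\<gamma> = F1" unfolding \<gamma>_def using r by simp
      then show ?thesis using 2 zero[OF \<open>r1 = 0\<close>] by (simp add: f_persp_def mult.commute)
    next
      case 3
      then have "a = 0" using ab by simp
      then show ?thesis using 3 by (simp add: f_persp_def)
    qed
  qed
  moreover have "measure P (space P) = 1" using PP by (simp add: prob_space.prob_space)
  moreover have "measure Q (space P) = 1" using PQ spQ by (metis prob_space.prob_space)
  moreover have "\<alpha> + \<gamma> = ((1 - r1) * f r2 + (r2 - 1) * F1) / (r2 - r1)" using lin[of 1] by simp
  ultimately show ?thesis by simp
qed

lemma upper_one:
  assumes tm: "two_meas P Q" and PP: "prob_space P" and PQ: "prob_space Q" and f1: "f 1 = 0"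
    and r2: "\<And>B. B \<in> sets P \<Longrightarrow> measure P B \<le> 1 * measure Q B"
    and r1: "\<And>B. B \<in> sets P \<Longrightarrow> 1 * measure Q B \<le> measure P B"
  shows "fdiv f P Q \<le> 0"
proof -
  interpret two_meas P Q by fact
  have "fdiv f P Q \<le> ereal (0 * measure P (space P) + 0 * measure Q (space P))"
  proof (rule fdiv_le_aff[OF r2 r1])
    fix a b :: real assume ab: "0 \<le> a" "0 \<le> b" "1 * b \<le> a" "a \<le> 1 * b"
    then have "a = b" by simp
    then show "f_persp f a b \<le> ereal (0 * a + 0 * b)" using f1 ab by (simp add: f_persp_def)
  qed
  then show ?thesis by (simp add: zero_ereal_def)
qed


lemma ldp_extract:
  assumes Q: "Q \<in> samplers Ps (g_eps \<epsilon>)" and P: "P \<in> Ps" "P' \<in> Ps" and S: "S \<in> sets borel"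
  shows "measure (Q P') S \<le> exp \<epsilon> * measure (Q P) S"
proof -
  have sp: "prob_space (Q P)" "sets (Q P) = sets borel" "prob_space (Q P')" "sets (Q P') = sets borel"
    using Q P unfolding samplers_def is_sampler_def by auto
  interpret Q1: prob_space "Q P" by (rule sp(1))
  interpret Q2: prob_space "Q P'" by (rule sp(3))
  define u where "u = measure (Q P) S"
  have u: "u \<in> {0..1}" unfolding u_def by simp
  have "g_eps \<epsilon> u \<le> tradeoff (Q P) (Q P') u"
    using Q P u unfolding samplers_def fldp_def by auto
  also have "tradeoff (Q P) (Q P') u \<le> 1 - measure (Q P') S"
    unfolding tradeoff_def
  proof (rule cInf_lower)
    have SP: "S \<in> sets (Q P)" "S \<in> sets (Q P')" using S sp by auto
    show "1 - measure (Q P') S \<in> {1 - integral\<^sup>L (Q P') \<phi> |\<phi>. \<phi> \<in> borel_measurable (Q P) \<and> (\<forall>x. 0 \<le> \<phi> x \<and> \<phi> x \<le> 1) \<and> integral\<^sup>L (Q P) \<phi> \<le> u}"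
      using SP unfolding u_def
      by (intro CollectI exI[of _ "indicator S"]) (auto simp: Int_absorb2 sets.sets_into_space)
    show "bdd_below {1 - integral\<^sup>L (Q P') \<phi> |\<phi>. \<phi> \<in> borel_measurable (Q P) \<and> (\<forall>x. 0 \<le> \<phi> x \<and> \<phi> x \<le> 1) \<and> integral\<^sup>L (Q P) \<phi> \<le> u}"
    proof (rule bdd_belowI[of _ 0])
      fix y assume "y \<in> {1 - integral\<^sup>L (Q P') \<phi> |\<phi>. \<phi> \<in> borel_measurable (Q P) \<and> (\<forall>x. 0 \<le> \<phi> x \<and> \<phi> x \<le> 1) \<and> integral\<^sup>L (Q P) \<phi> \<le> u}"
      then obtain \<phi> where y: "y = 1 - integral\<^sup>L (Q P') \<phi>" and m: "\<phi> \<in> borel_measurable (Q P)"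
        and b: "\<And>x. 0 \<le> \<phi> x" "\<And>x. \<phi> x \<le> 1" by blast
      have m': "\<phi> \<in> borel_measurable (Q P')" using m sp by (simp cong: measurable_cong_sets)
      have "integrable (Q P') \<phi>" using m' b by (intro Q2.integrable_const_bound[of _ 1]) auto
      then have "integral\<^sup>L (Q P') \<phi> \<le> integral\<^sup>L (Q P') (\<lambda>_. 1)"
        using b by (intro integral_mono) auto
      then show "0 \<le> y" using y Q2.prob_space by simp
    qed
  qed
  finally have "g_eps \<epsilon> u \<le> 1 - measure (Q P') S" .
  moreover have "1 - exp \<epsilon> * u \<le> g_eps \<epsilon> u" unfolding g_eps_def by simp
  ultimately show ?thesis unfolding u_def by simp
qed

lemma exists_ge_avg:
  fixes L :: "nat \<Rightarrow> real"
  assumes "0 < k"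
  shows "\<exists>i<k. (\<Sum>j<k. L j) / real k \<le> L i"
proof (rule ccontr)
  assume "\<not> ?thesis"
  then have "\<And>i. i < k \<Longrightarrow> L i < (\<Sum>j<k. L j) / real k" by auto
  then have "(\<Sum>i<k. L i) < (\<Sum>i<k. (\<Sum>j<k. L j) / real k)"
    using assms by (intro sum_strict_mono) auto
  then show False using assms by simp
qed

lemma lower_bound:
  fixes h :: "'a::euclidean_space \<Rightarrow> real" and k :: nat
  assumes h: "is_density h" and c1: "0 \<le> c1" and c12: "c1 \<le> c2"
    and k: "c2 - c1 = real k * (1 - c1)" "2 \<le> k"
    and Q: "Q \<in> samplers (Pclass c1 c2 h) (g_eps \<epsilon>)"
    and cf: "convex_on {0<..} f"
    and m1: "\<And>t. 0 < t \<Longrightarrow> \<alpha>1 * t + \<gamma>1 \<le> f t" and m2: "\<And>t. 0 < t \<Longrightarrow> \<alpha>2 * t + \<gamma>2 \<le> f t"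
    and g12: "\<gamma>2 \<le> \<gamma>1"
    and a: "a = exp \<epsilon> / (real k - 1 + exp \<epsilon>)" and ar2: "a * r2 = c2 / real k"
    and ar1: "(1 - a) * r1 = c1 * (real k - 1) / real k"
  shows "ereal (a * (\<alpha>2 * r2 + \<gamma>2) + (1 - a) * (\<alpha>1 * r1 + \<gamma>1)) \<le> (SUP P\<in>Pclass c1 c2 h. fdiv f P (Q P))"
proof -
  let ?H = "density lborel (\<lambda>x. ennreal (h x))"
  define E where "E = exp \<epsilon>"
  have E0: "0 < E" unfolding E_def by simp
  have kr: "real k \<ge> 2" using k by simp
  have hm[measurable]: "h \<in> borel_measurable borel" and h0: "\<And>x. 0 \<le> h x" and h1: "(\<integral>\<^sup>+ x. ennreal (h x) \<partial>lborel) = 1"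
    using h unfolding is_density_def by auto
  have "emeasure ?H (space ?H) = 1" by (subst emeasure_density) (auto simp: h1)
  then interpret H: prob_space ?H by (intro prob_spaceI)
  obtain A where Ab[measurable]: "\<And>i. A i \<in> sets borel"
    and Ad: "\<And>i j. i < k \<Longrightarrow> j < k \<Longrightarrow> i \<noteq> j \<Longrightarrow> A i \<inter> A j = {}"
    and Am: "\<And>i. i < k \<Longrightarrow> measure ?H (A i) = 1 / k"
    using partition_exists[OF h k(2)] by blast
  have HA: "emeasure ?H (A i) = ennreal (1 / k)" if "i < k" for i
    using Am[OF that] H.emeasure_eq_measure by simp
  have HAc: "emeasure ?H (UNIV - A i) = ennreal (1 - 1 / k)" if "i < k" for i
  proof -
    have "measure ?H (space ?H - A i) = 1 - measure ?H (A i)" by (rule H.prob_compl) simp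
    then show ?thesis using Am[OF that] H.emeasure_eq_measure by simp
  qed
  define p where "p i x = (if x \<in> A i then c2 else c1) * h x" for i x
  have pm[measurable]: "p i \<in> borel_measurable borel" for i unfolding p_def by measurable
  have p0: "0 \<le> p i x" for i x unfolding p_def using c1 c12 h0[of x] by auto
  define Pi where "Pi i = density lborel (\<lambda>x. ennreal (p i x))" for i
  have emP: "emeasure (Pi i) B = ennreal c2 * emeasure ?H (A i \<inter> B) + ennreal c1 * emeasure ?H (B - A i)"
    if B: "B \<in> sets borel" for i B
  proof -
    have "emeasure (Pi i) B = (\<integral>\<^sup>+ x. ennreal (p i x) * indicator B x \<partial>lborel)"
      unfolding Pi_def using B by (subst emeasure_density) auto
    also have "\<dots> = (\<integral>\<^sup>+ x. ennreal c2 * (ennreal (h x) * indicator (A i \<inter> B) x)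
        + ennreal c1 * (ennreal (h x) * indicator (B - A i) x) \<partial>lborel)"
      using c1 c12 h0 by (intro nn_integral_cong) (auto simp: p_def indicator_def ennreal_mult)
    also have "\<dots> = ennreal c2 * (\<integral>\<^sup>+ x. ennreal (h x) * indicator (A i \<inter> B) x \<partial>lborel)
        + ennreal c1 * (\<integral>\<^sup>+ x. ennreal (h x) * indicator (B - A i) x \<partial>lborel)"
      using B by (simp add: nn_integral_add nn_integral_cmult)
    also have "\<dots> = ennreal c2 * emeasure ?H (A i \<inter> B) + ennreal c1 * emeasure ?H (B - A i)"
      using B by (simp add: emeasure_density)
    finally show ?thesis .
  qed
  have kc: "c2 / real k + c1 * (1 - 1 / real k) = 1"
  proof -
    have "c2 = c1 + real k * (1 - c1)" using k(1) by simp
    then have "c2 + c1 * (real k - 1) = real k" by (simp add: algebra_simps)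
    then show ?thesis using kr by (simp add: field_simps)
  qed
  have Pspace: "emeasure (Pi i) UNIV = 1" if "i < k" for i
  proof -
    have "emeasure (Pi i) UNIV = ennreal c2 * ennreal (1 / k) + ennreal c1 * ennreal (1 - 1 / k)"
      using emP[of UNIV i] HA[OF that] HAc[OF that] by simp
    also have "\<dots> = ennreal (c2 * (1 / real k)) + ennreal (c1 * (1 - 1 / real k))"
      by (subst (1 2) ennreal_mult) (use c1 c12 kr in auto)
    also have "\<dots> = ennreal (c2 * (1 / real k) + c1 * (1 - 1 / real k))"
      using c1 c12 kr by (intro ennreal_plus[symmetric]) auto
    also have "c2 * (1 / real k) + c1 * (1 - 1 / real k) = c2 / real k + c1 * (1 - 1 / real k)" by simp
    finally show ?thesis using kc by simp
  qed
  have PA: "emeasure (Pi i) (A i) = ennreal (c2 / real k)" if "i < k" for i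
  proof -
    have "emeasure (Pi i) (A i) = ennreal c2 * ennreal (1 / k)" using emP[of "A i" i] HA[OF that] by simp
    also have "\<dots> = ennreal (c2 * (1 / k))" by (subst ennreal_mult) (use c1 c12 in auto)
    finally show ?thesis by simp
  qed
  have Pprob: "prob_space (Pi i)" if "i < k" for i
    using Pspace[OF that] by (intro prob_spaceI) (simp add: Pi_def)
  have Pmeas: "measure (Pi i) (A i) = c2 / real k" "measure (Pi i) (UNIV - A i) = 1 - c2 / real k" if "i < k" for i
  proof -
    interpret PP: prob_space "Pi i" by (rule Pprob[OF that])
    show m: "measure (Pi i) (A i) = c2 / real k" using PA[OF that] c1 c12 kr by (simp add: measure_def)
    have "measure (Pi i) (space (Pi i) - A i) = 1 - measure (Pi i) (A i)" by (rule PP.prob_compl) (simp add: Pi_def)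
    then show "measure (Pi i) (UNIV - A i) = 1 - c2 / real k" using m by (simp add: Pi_def)
  qed
  have Pcl: "Pi i \<in> Pclass c1 c2 h" if "i < k" for i
    unfolding Pclass_def
  proof (intro CollectI exI conjI allI)
    show "Pi i = density lborel (\<lambda>x. ennreal (p i x))" by (simp add: Pi_def)
    have "(\<integral>\<^sup>+ x. ennreal (p i x) \<partial>lborel) = emeasure (Pi i) UNIV"
      unfolding Pi_def by (subst emeasure_density) auto
    then show "is_density (p i)" unfolding is_density_def using Pspace[OF that] p0 by auto
    fix x
    show "c1 * h x \<le> p i x" "p i x \<le> c2 * h x" unfolding p_def using c12 h0[of x] by (auto intro: mult_right_mono)
  qed
  define Qi where "Qi i = Q (Pi i)" for i
  have Qprop: "prob_space (Qi i)" "sets (Qi i) = sets borel" if "i < k" for i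
    using Q Pcl[OF that] unfolding samplers_def is_sampler_def Qi_def by auto
  define m where "m i = measure (Qi i) (A i)" for i
  have Qc: "measure (Qi i) (UNIV - A i) = 1 - m i" if "i < k" for i
  proof -
    interpret QQ: prob_space "Qi i" by (rule Qprop(1)[OF that])
    have sp: "space (Qi i) = UNIV" using sets_eq_imp_space_eq[OF Qprop(2)[OF that]] by simp
    have "measure (Qi i) (space (Qi i) - A i) = 1 - measure (Qi i) (A i)"
      by (rule QQ.prob_compl) (use Qprop(2)[OF that] in simp)
    then show ?thesis using sp by (simp add: m_def)
  qed
  define L where "L i = \<alpha>2 * (c2 / real k) + \<gamma>2 * m i + \<alpha>1 * (1 - c2 / real k) + \<gamma>1 * (1 - m i)" for i
  have Lle: "ereal (L i) \<le> fdiv f (Pi i) (Qi i)" if "i < k" for i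
  proof -
    interpret PP: prob_space "Pi i" by (rule Pprob[OF that])
    interpret QQ: prob_space "Qi i" by (rule Qprop(1)[OF that])
    interpret tm: two_meas "Pi i" "Qi i"
      by unfold_locales (use Qprop(2)[OF that] in \<open>auto simp: Pi_def\<close>)
    have sp: "space (Pi i) = UNIV" by (simp add: Pi_def)
    have "A i \<in> sets (Pi i)" by (simp add: Pi_def)
    from tm.fdiv_ge_two[OF cf m1 m2 this]
    show ?thesis unfolding sp Pmeas[OF that] Qc[OF that] L_def m_def[symmetric] by simp
  qed
  have ldp: "m i \<le> E * measure (Qi j) (A i)" if "i < k" "j < k" for i j
    unfolding m_def Qi_def E_def using ldp_extract[OF Q Pcl[OF that(2)] Pcl[OF that(1)] Ab[of i]] .
  have mnn: "0 \<le> measure (Qi j) (A i)" for i j by simp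
  define S where "S = (\<Sum>i<k. m i)"
  have s1: "(real k - 1) * S = (\<Sum>i<k. \<Sum>j<k. if j \<noteq> i then m i else 0)"
  proof -
    have "(\<Sum>j<k. if j \<noteq> i then m i else 0) = (real k - 1) * m i" if "i < k" for i
    proof -
      have "(\<Sum>j<k. if j \<noteq> i then m i else 0) = (\<Sum>j<k. m i - (if j = i then m i else 0))"
        by (intro sum.cong) auto
      also have "\<dots> = real k * m i - m i" using that by (simp add: sum_subtractf)
      finally show ?thesis by (simp add: algebra_simps)
    qed
    then show ?thesis unfolding S_def by (simp add: sum_distrib_left)
  qed
  have s2: "(\<Sum>i<k. \<Sum>j<k. if j \<noteq> i then m i else 0) \<le> (\<Sum>i<k. \<Sum>j<k. if j \<noteq> i then E * measure (Qi j) (A i) else 0)"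
    using ldp by (intro sum_mono) auto
  have s3: "(\<Sum>i<k. \<Sum>j<k. if j \<noteq> i then E * measure (Qi j) (A i) else 0)
      = E * (\<Sum>j<k. \<Sum>i<k. if i \<noteq> j then measure (Qi j) (A i) else 0)"
  proof -
    have "(\<Sum>i<k. \<Sum>j<k. if j \<noteq> i then E * measure (Qi j) (A i) else 0)
        = (\<Sum>j<k. \<Sum>i<k. if j \<noteq> i then E * measure (Qi j) (A i) else 0)" by (rule sum.swap)
    also have "\<dots> = (\<Sum>j<k. \<Sum>i<k. E * (if i \<noteq> j then measure (Qi j) (A i) else 0))"
      by (intro sum.cong refl) auto
    also have "\<dots> = E * (\<Sum>j<k. \<Sum>i<k. if i \<noteq> j then measure (Qi j) (A i) else 0)"
      by (simp only: sum_distrib_left)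
    finally show ?thesis .
  qed
  have s4: "(\<Sum>i<k. if i \<noteq> j then measure (Qi j) (A i) else 0) \<le> 1 - m j" if j: "j < k" for j
  proof -
    interpret QQ: prob_space "Qi j" by (rule Qprop(1)[OF j])
    have "(\<Sum>i<k. if i \<noteq> j then measure (Qi j) (A i) else 0) = (\<Sum>i\<in>{..<k} - {j}. measure (Qi j) (A i))"
      by (simp add: sum.If_cases) (intro sum.cong; auto)
    also have "\<dots> = measure (Qi j) (\<Union>i\<in>{..<k} - {j}. A i)"
      using Qprop(2)[OF j] Ad by (intro QQ.finite_measure_finite_Union[symmetric]) (auto simp: disjoint_family_on_def)
    also have "\<dots> \<le> measure (Qi j) (UNIV - A j)"
      using Qprop(2)[OF j] Ad[of j] j by (intro QQ.finite_measure_mono) auto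
    also have "\<dots> = 1 - m j" by (rule Qc[OF j])
    finally show ?thesis .
  qed
  have "(real k - 1) * S \<le> E * (\<Sum>j<k. 1 - m j)"
  proof -
    have "(\<Sum>j<k. \<Sum>i<k. if i \<noteq> j then measure (Qi j) (A i) else 0) \<le> (\<Sum>j<k. 1 - m j)"
      using s4 by (intro sum_mono) auto
    then have "E * (\<Sum>j<k. \<Sum>i<k. if i \<noteq> j then measure (Qi j) (A i) else 0) \<le> E * (\<Sum>j<k. 1 - m j)"
      using E0 by (intro mult_left_mono) auto
    then show ?thesis using s1 s2 s3 by linarith
  qed
  also have "(\<Sum>j<k. 1 - m j) = real k - S" unfolding S_def by (simp add: sum_subtractf)
  finally have SE: "(real k - 1) * S \<le> E * (real k - S)" .
  have Sa: "S / real k \<le> a"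
  proof -
    have "S * (real k - 1 + E) \<le> E * real k" using SE by (simp add: algebra_simps)
    then have "S \<le> E * real k / (real k - 1 + E)" using kr E0 by (simp add: le_divide_eq)
    then have "S / real k \<le> E / (real k - 1 + E)" using kr by (simp add: divide_le_eq field_simps)
    then show ?thesis unfolding a E_def .
  qed
  have avg: "(\<Sum>i<k. L i) / real k = \<alpha>2 * (c2 / real k) + \<alpha>1 * (1 - c2 / real k) + \<gamma>1 + (\<gamma>2 - \<gamma>1) * (S / real k)"
  proof -
    have "L i = (\<alpha>2 * (c2 / real k) + \<alpha>1 * (1 - c2 / real k) + \<gamma>1) + (\<gamma>2 - \<gamma>1) * m i" for i
      unfolding L_def by (simp add: algebra_simps)
    then have "(\<Sum>i<k. L i) = real k * (\<alpha>2 * (c2 / real k) + \<alpha>1 * (1 - c2 / real k) + \<gamma>1) + (\<gamma>2 - \<gamma>1) * S"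
      unfolding S_def by (simp add: sum.distrib sum_distrib_left)
    then show ?thesis using kr by (simp add: field_simps)
  qed
  have tgt: "a * (\<alpha>2 * r2 + \<gamma>2) + (1 - a) * (\<alpha>1 * r1 + \<gamma>1)
      = \<alpha>2 * (c2 / real k) + \<alpha>1 * (1 - c2 / real k) + \<gamma>1 + (\<gamma>2 - \<gamma>1) * a"
  proof -
    have "c1 * (real k - 1) / real k = 1 - c2 / real k" using kc kr by (simp add: field_simps)
    then have ar1': "(1 - a) * r1 = 1 - c2 / real k" using ar1 by simp
    have "a * (\<alpha>2 * r2 + \<gamma>2) + (1 - a) * (\<alpha>1 * r1 + \<gamma>1) = \<alpha>2 * (a * r2) + \<alpha>1 * ((1 - a) * r1) + \<gamma>1 + (\<gamma>2 - \<gamma>1) * a"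
      by (simp add: algebra_simps)
    then show ?thesis unfolding ar2 ar1' .
  qed
  have "(\<gamma>2 - \<gamma>1) * a \<le> (\<gamma>2 - \<gamma>1) * (S / real k)"
    using Sa g12 by (intro mult_left_mono_neg) auto
  then have t1: "a * (\<alpha>2 * r2 + \<gamma>2) + (1 - a) * (\<alpha>1 * r1 + \<gamma>1) \<le> (\<Sum>i<k. L i) / real k"
    unfolding tgt avg by simp
  obtain i where i: "i < k" "(\<Sum>j<k. L j) / real k \<le> L i" using exists_ge_avg[of k L] k by auto
  have "ereal (a * (\<alpha>2 * r2 + \<gamma>2) + (1 - a) * (\<alpha>1 * r1 + \<gamma>1)) \<le> ereal (L i)" using t1 i by simp
  also have "\<dots> \<le> fdiv f (Pi i) (Q (Pi i))" using Lle[OF i(1)] by (simp add: Qi_def)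
  also have "\<dots> \<le> (SUP P\<in>Pclass c1 c2 h. fdiv f P (Q P))" using Pcl[OF i(1)] by (rule SUP_upper)
  finally show ?thesis .
qed


lemma intercept_mono:
  fixes f :: "real \<Rightarrow> real"
  assumes st: "0 < s" "s < t"
    and ms: "\<And>x. 0 < x \<Longrightarrow> f s + gs * (x - s) \<le> f x"
    and mt: "\<And>x. 0 < x \<Longrightarrow> f t + gt * (x - t) \<le> f x"
  shows "f t - gt * t \<le> f s - gs * s"
proof -
  have a: "f t + gt * (s - t) \<le> f s" using mt[of s] st by simp
  have b: "f s + gs * (t - s) \<le> f t" using ms[of t] st by simp
  have "(gs - gt) * (t - s) \<le> 0" using a b by (simp add: algebra_simps)
  then have g: "gs \<le> gt" using st by (simp add: mult_le_0_iff)
  have "(gt - gs) * s \<ge> 0" using g st by simp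
  then show ?thesis using a by (simp add: algebra_simps)
qed

lemma ereal_sup_lemma:
  fixes Z S :: ereal and c w :: real
  assumes w: "0 < w" and Z: "Z \<noteq> - \<infinity>" and H: "\<And>y. ereal y < Z \<Longrightarrow> ereal (c + w * y) \<le> S"
  shows "ereal c + ereal w * Z \<le> S"
proof (cases Z)
  case (real z)
  show ?thesis
  proof (rule ccontr)
    assume "\<not> ereal c + ereal w * Z \<le> S"
    then have lt: "S < ereal (c + w * z)" using real by simp
    have "ereal (c + w * (z - 1)) \<le> S" using H[of "z - 1"] real by simp
    then obtain s where s: "S = ereal s" using lt by (cases S) auto
    have sl: "s < c + w * z" using lt s by simp
    define y where "y = ((s - c) / w + z) / 2"
    have "(s - c) / w < z" using sl w by (simp add: divide_less_eq algebra_simps)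
    then have "y < z" unfolding y_def by simp
    then have "ereal (c + w * y) \<le> S" using H real by simp
    then have "c + w * y \<le> s" using s by simp
    moreover have "c + w * y = (s + c + w * z) / 2" unfolding y_def using w by (simp add: field_simps)
    ultimately show False using sl by simp
  qed
next
  case PInf
  have "S = \<infinity>"
  proof (rule ccontr)
    assume "S \<noteq> \<infinity>"
    moreover have "ereal (c + w * 0) \<le> S" using H[of 0] PInf by simp
    ultimately obtain s where s: "S = ereal s" by (cases S) auto
    have "ereal (c + w * ((s - c) / w + 1)) \<le> S" using H PInf by simp
    then have "c + w * ((s - c) / w + 1) \<le> s" using s by simp
    moreover have "c + w * ((s - c) / w + 1) = s + w" using w by (simp add: field_simps)
    ultimately show False using w by simp
  qed
  then show ?thesis by simp
next
  case MInf with Z show ?thesis by simp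
qed

theorem corollary1:
  fixes h :: "'a::euclidean_space \<Rightarrow> real"
    and c1 c2 \<epsilon> :: real
  assumes h_dens: "is_density h"
    and c1: "0 \<le> c1" "c1 < 1" and c2: "1 < c2"
    and ratio: "(c2 - c1) / (1 - c1) \<in> \<nat>"
    and eps: "0 \<le> \<epsilon>"
    and beta: "\<exists>\<beta>\<ge>0. 1 + conj01 (g_eps \<epsilon>) (- exp \<beta>)
                 \<le> (c2 - c1 * exp \<beta>) * (1 - c1) / (c2 - c1)"
  defines "Qstar \<equiv> (let lam = (exp \<epsilon> - 1) / ((1 - c1) * exp \<epsilon> + c2 - 1) in
            (\<lambda>P. density lborel
              (\<lambda>x. ennreal lam * RN_deriv lborel P x + ennreal (1 - lam) * ennreal (h x))))"
    and "r1 \<equiv> c1 * (((1 - c1) * exp \<epsilon> + c2 - 1) / (c2 - c1))"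
    and "r2 \<equiv> c2 / (c2 - c1) * (((1 - c1) * exp \<epsilon> + c2 - 1) / exp \<epsilon>)"
  shows "Qstar \<in> samplers (Pclass c1 c2 h) (g_eps \<epsilon>) \<and>
         (\<forall>f. convex_on {0<..} f \<and> f 1 = 0 \<longrightarrow>
            (SUP P\<in>Pclass c1 c2 h. fdiv f P (Qstar P))
              = minimax_risk (samplers (Pclass c1 c2 h) (g_eps \<epsilon>)) (Pclass c1 c2 h) f \<and>
            minimax_risk (samplers (Pclass c1 c2 h) (g_eps \<epsilon>)) (Pclass c1 c2 h) f
              = ereal ((1 - r1) / (r2 - r1) * f r2) + ereal ((r2 - 1) / (r2 - r1)) * f_ext f r1)"
proof -
  obtain k :: nat where k: "2 \<le> k" "c2 - c1 = real k * (1 - c1)" using k_nat[OF ratio c1(2) c2] by blast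
  define E where "E = exp \<epsilon>"
  have E1: "1 \<le> E" using eps by (simp add: E_def)
  have cE: "c1 * E \<le> c2" unfolding E_def by (rule cE_le_c2[OF c1 c2 ratio eps beta])
  define lam where "lam = (E - 1) / ((1 - c1) * E + c2 - 1)"
  define a where "a = E * (1 - c1) / ((1 - c1) * E + c2 - 1)"
  note pr = params[OF c1 c2 k(2,1) E1 cE, folded lam_def a_def]
  have r1e: "r1 = c1 * (((1 - c1) * E + c2 - 1) / (c2 - c1))" unfolding assms E_def ..
  have r2e: "r2 = c2 / (c2 - c1) * (((1 - c1) * E + c2 - 1) / E)" unfolding assms E_def ..
  note pr = pr[folded r1e r2e]
  have lam0: "0 \<le> lam" "lam \<le> 1" using pr by auto
  have Qs: "Qstar = Qfun lam h" unfolding Qstar_def Qfun_def lam_def E_def Let_def ..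
  have samp: "Qstar \<in> samplers (Pclass c1 c2 h) (g_eps \<epsilon>)"
    unfolding Qs by (rule Qfun_sampler[OF h_dens lam0 eps]) (use pr(17) in \<open>simp add: E_def\<close>)
  have hm: "h \<in> borel_measurable borel" and h0: "\<And>x. 0 \<le> h x" using h_dens unfolding is_density_def by auto
  have a_r: "a * r2 + (1 - a) * r1 = 1" "0 < a" "a < 1" "0 \<le> r1" "0 < r2" "r1 \<le> r2" using pr by auto
  show ?thesis
  proof (intro conjI allI impI samp)
    fix f :: "real \<Rightarrow> real" assume fa: "convex_on {0<..} f \<and> f 1 = 0"
    then have cf: "convex_on {0<..} f" and f1: "f 1 = 0" by auto
    define F where "F = ereal ((1 - r1) / (r2 - r1) * f r2) + ereal ((r2 - 1) / (r2 - r1)) * f_ext f r1"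
    define SQ where "SQ = (SUP P\<in>Pclass c1 c2 h. fdiv f P (Qstar P))"
    define MM where "MM = minimax_risk (samplers (Pclass c1 c2 h) (g_eps \<epsilon>)) (Pclass c1 c2 h) f"
    have upper: "fdiv f P (Qstar P) \<le> F" if P: "P \<in> Pclass c1 c2 h" for P
    proof -
      obtain p where Pp: "P = density lborel (\<lambda>x. ennreal (p x))" "is_density p"
        "\<forall>x. c1 * h x \<le> p x" "\<forall>x. p x \<le> c2 * h x" using P by (rule Pclass_elim)
      have pm: "p \<in> borel_measurable borel" and p0: "\<And>x. 0 \<le> p x" and p1: "(\<integral>\<^sup>+ x. ennreal (p x) \<partial>lborel) = 1"
        using Pp(2) unfolding is_density_def by auto
      define q where "q x = lam * p x + (1 - lam) * h x" for x
      have qm: "q \<in> borel_measurable borel" unfolding q_def using pm hm by simp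
      have q0: "\<And>x. 0 \<le> q x" unfolding q_def using p0 h0 lam0 by simp
      have QP1: "Qstar P = density lborel (\<lambda>x. ennreal (q x))"
      proof -
        have "Qstar P = Qfun lam h (density lborel (\<lambda>x. ennreal (p x)))" using Qs Pp(1) by simp
        also have "\<dots> = density lborel (\<lambda>x. ennreal (lam * p x + (1 - lam) * h x))"
          by (rule Qfun_eq(1)[OF Pp(2) h_dens lam0])
        finally show ?thesis unfolding q_def .
      qed
      have QP2: "prob_space (density lborel (\<lambda>x. ennreal (q x)))"
        unfolding q_def by (rule Qfun_eq(2)[OF Pp(2) h_dens lam0])
      note QP = QP1 QP2
      have PP: "prob_space P"
      proof -
        note [measurable] = pm
        have "emeasure (density lborel (\<lambda>x. ennreal (p x))) (space lborel) = 1"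
          by (subst emeasure_density) (measurable, simp add: p1)
        then show ?thesis unfolding Pp(1) by (intro prob_spaceI) simp
      qed
      have tm: "two_meas P (Qstar P)"
      proof (rule two_meas.intro)
        show "finite_measure P" using PP by (simp add: prob_space_def)
        show "finite_measure (Qstar P)" using QP by (simp add: prob_space_def)
        show "sets (Qstar P) = sets P" using QP1 Pp(1) by simp
      qed
      have pw2: "p x \<le> r2 * q x" for x
      proof -
        have "r2 * q x = r2 * lam * p x + (r2 * (1 - lam)) * h x" unfolding q_def by (simp add: algebra_simps)
        then have "r2 * q x = r2 * lam * p x + (c2 * (1 - r2 * lam)) * h x" unfolding pr(6) .
        then have "r2 * q x - p x = (1 - r2 * lam) * (c2 * h x - p x)" by (simp add: algebra_simps)
        moreover have "0 \<le> (1 - r2 * lam) * (c2 * h x - p x)" using pr(4) Pp(4) by simp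
        ultimately show ?thesis by simp
      qed
      have pw1: "r1 * q x \<le> p x" for x
      proof -
        have "r1 * q x = r1 * lam * p x + (r1 * (1 - lam)) * h x" unfolding q_def by (simp add: algebra_simps)
        then have "r1 * q x = r1 * lam * p x + (c1 * (1 - r1 * lam)) * h x" unfolding pr(7) .
        then have "p x - r1 * q x = (1 - r1 * lam) * (p x - c1 * h x)" by (simp add: algebra_simps)
        moreover have "0 \<le> (1 - r1 * lam) * (p x - c1 * h x)" using pr(5) Pp(3) by simp
        ultimately show ?thesis by simp
      qed
      have sP: "sets P = sets borel" unfolding Pp(1) by simp
      have set2: "measure P B \<le> r2 * measure (Qstar P) B" if "B \<in> sets P" for B
        unfolding QP(1) unfolding Pp(1) using that sP
        by (intro dens_measure_le[OF pm qm p0 q0 _ pw2 QP(2)]) (use a_r in auto)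
      have set1: "r1 * measure (Qstar P) B \<le> measure P B" if B: "B \<in> sets P" for B
      proof (cases "r1 = 0")
        case True then show ?thesis by simp
      next
        case False
        then have r1p: "0 < r1" using a_r by simp
        have "q x \<le> (1 / r1) * p x" for x using pw1[of x] r1p by (simp add: field_simps)
        then have "measure (Qstar P) B \<le> (1 / r1) * measure P B"
          unfolding QP(1) unfolding Pp(1) using B sP
          by (intro dens_measure_le[OF qm pm q0 p0]) (use r1p Pp(1) PP in auto)
        then show ?thesis using r1p by (simp add: field_simps)
      qed
      show ?thesis
      proof (cases "r1 = r2")
        case True
        then have "r1 = 1" "r2 = 1" using a_r(1) by (auto simp: algebra_simps)
        then have F0: "F = 0" unfolding F_def by (simp add: f_ext_def f1)
        have "fdiv f P (Qstar P) \<le> 0"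
          by (rule upper_one[where f=f, OF tm PP _ f1]) (use set1 set2 QP \<open>r1 = 1\<close> \<open>r2 = 1\<close> in auto)
        then show ?thesis using F0 by simp
      next
        case False
        then have rl: "r1 < r2" using a_r by simp
        have w2: "(1 - r1) / (r2 - r1) = a" and w1: "(r2 - 1) / (r2 - r1) = 1 - a"
        proof -
          have "a * (r2 - r1) = 1 - r1" using a_r(1) by (simp add: algebra_simps)
          then show "(1 - r1) / (r2 - r1) = a" using rl by (simp add: field_simps)
          have "(1 - a) * (r2 - r1) = r2 - 1" using a_r(1) by (simp add: algebra_simps)
          then show "(r2 - 1) / (r2 - r1) = 1 - a" using rl by (simp add: field_simps)
        qed
        have Fe: "F = ereal (a * f r2) + ereal (1 - a) * f_ext f r1" unfolding F_def w1 w2 ..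
        have comb: "ereal (a * f r2) + ereal (1 - a) * ereal F1 = ereal (((1 - r1) * f r2 + (r2 - 1) * F1) / (r2 - r1))" for F1
        proof -
          have "((1 - r1) * f r2 + (r2 - 1) * F1) / (r2 - r1) = (1 - r1) / (r2 - r1) * f r2 + (r2 - 1) / (r2 - r1) * F1"
            by (simp add: add_divide_distrib)
          then show ?thesis unfolding w1 w2 by simp
        qed
        show ?thesis
        proof (cases "r1 = 0")
          case False
          then have r1p: "0 < r1" using a_r by simp
          have "fdiv f P (Qstar P) \<le> ereal (((1 - r1) * f r2 + (r2 - 1) * f r1) / (r2 - r1))"
            by (rule upper_generic[OF tm PP _ set2 set1 a_r(4) rl]) (use QP convex_chord[OF cf r1p rl] False in auto)
          then show ?thesis unfolding Fe using comb[of "f r1"] r1p by (simp add: f_ext_def)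
        next
          case True
          show ?thesis
          proof (cases "f_zero f")
            case (real F0)
            have "fdiv f P (Qstar P) \<le> ereal (((1 - r1) * f r2 + (r2 - 1) * F0) / (r2 - r1))"
            proof (rule upper_generic[OF tm PP _ set2 set1 a_r(4) rl])
              show "prob_space (Qstar P)" using QP by simp
              show "f_zero f = ereal F0" if "r1 = 0" using real .
              fix t :: real assume t: "0 < t" "r1 \<le> t" "t \<le> r2"
              show "f t \<le> ((r2 - t) * F0 + (t - r1) * f r2) / (r2 - r1)"
                using f_zero_chord[OF cf real t(1,3)] True by simp
            qed
            then show ?thesis unfolding Fe using comb[of F0] True real by (simp add: f_ext_def)
          next
            case PInf
            have "F = \<infinity>" unfolding Fe using PInf True a_r by (simp add: f_ext_def)
            then show ?thesis by simp
          next
            case MInf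
            then show ?thesis using f_zero_not_MInf[OF cf] by simp
          qed
        qed
      qed
    qed
    have lower: "F \<le> (SUP P\<in>Pclass c1 c2 h. fdiv f P (Q P))" if Q: "Q \<in> samplers (Pclass c1 c2 h) (g_eps \<epsilon>)" for Q
    proof -
      have c12: "c1 \<le> c2" using c1 c2 by simp
      have aE: "a = exp \<epsilon> / (real k - 1 + exp \<epsilon>)" using pr(16) unfolding E_def .
      note LB = lower_bound[OF h_dens c1(1) c12 k(2) k(1) Q cf _ _ _ aE pr(8) pr(9)]
      obtain g2 where g2: "\<And>t. 0 < t \<Longrightarrow> f r2 + g2 * (t - r2) \<le> f t" using convex_subgrad[OF cf a_r(5)] by blast
      have m2: "g2 * t + (f r2 - g2 * r2) \<le> f t" if "0 < t" for t using g2[OF that] by (simp add: algebra_simps)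
      show ?thesis
      proof (cases "r1 = r2")
        case True
        then have r11: "r1 = 1" "r2 = 1" using a_r(1) by (auto simp: algebra_simps)
        then have F0: "F = 0" unfolding F_def by (simp add: f_ext_def f1)
        have "ereal (a * (g2 * r2 + (f r2 - g2 * r2)) + (1 - a) * (g2 * r1 + (f r2 - g2 * r2))) \<le> (SUP P\<in>Pclass c1 c2 h. fdiv f P (Q P))"
          by (rule LB) (use m2 in auto)
        then show ?thesis using F0 r11 f1 by (simp add: algebra_simps zero_ereal_def)
      next
        case False
        then have rl: "r1 < r2" using a_r by simp
        have w2: "(1 - r1) / (r2 - r1) = a" and w1: "(r2 - 1) / (r2 - r1) = 1 - a"
        proof -
          have "a * (r2 - r1) = 1 - r1" using a_r(1) by (simp add: algebra_simps)
          then show "(1 - r1) / (r2 - r1) = a" using rl by (simp add: field_simps)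
          have "(1 - a) * (r2 - r1) = r2 - 1" using a_r(1) by (simp add: algebra_simps)
          then show "(r2 - 1) / (r2 - r1) = 1 - a" using rl by (simp add: field_simps)
        qed
        have Fe: "F = ereal (a * f r2) + ereal (1 - a) * f_ext f r1" unfolding F_def w1 w2 ..
        show ?thesis
        proof (cases "r1 = 0")
          case False
          then have r1p: "0 < r1" using a_r by simp
          obtain g1 where g1: "\<And>t. 0 < t \<Longrightarrow> f r1 + g1 * (t - r1) \<le> f t" using convex_subgrad[OF cf r1p] by blast
          have m1: "g1 * t + (f r1 - g1 * r1) \<le> f t" if "0 < t" for t using g1[OF that] by (simp add: algebra_simps)
          have g12: "f r2 - g2 * r2 \<le> f r1 - g1 * r1" by (rule intercept_mono[OF r1p rl g1 g2])
          have "ereal (a * (g2 * r2 + (f r2 - g2 * r2)) + (1 - a) * (g1 * r1 + (f r1 - g1 * r1))) \<le> (SUP P\<in>Pclass c1 c2 h. fdiv f P (Q P))"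
            by (rule LB) (use m1 m2 g12 in auto)
          then show ?thesis unfolding Fe using r1p by (simp add: f_ext_def)
        next
          case True
          have "ereal (a * f r2) + ereal (1 - a) * f_zero f \<le> (SUP P\<in>Pclass c1 c2 h. fdiv f P (Q P))"
          proof (rule ereal_sup_lemma)
            show "0 < 1 - a" using a_r by simp
            show "f_zero f \<noteq> - \<infinity>" by (rule f_zero_not_MInf[OF cf])
            fix y assume y: "ereal y < f_zero f"
            obtain d g where dg: "0 < d" "d < r2" "\<forall>t>0. f d + g * (t - d) \<le> f t" "y < f d - g * d"
              using f_zero_approx[OF cf y a_r(5)] by blast
            have m1: "g * t + (f d - g * d) \<le> f t" if "0 < t" for t using dg(3)[rule_format, OF that] by (simp add: algebra_simps)
            have g12: "f r2 - g2 * r2 \<le> f d - g * d"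
              by (rule intercept_mono[OF dg(1,2)]) (use dg(3) g2 in auto)
            have "ereal (a * (g2 * r2 + (f r2 - g2 * r2)) + (1 - a) * (g * r1 + (f d - g * d))) \<le> (SUP P\<in>Pclass c1 c2 h. fdiv f P (Q P))"
              by (rule LB) (use m1 m2 g12 in auto)
            moreover have "a * f r2 + (1 - a) * y \<le> a * (g2 * r2 + (f r2 - g2 * r2)) + (1 - a) * (g * r1 + (f d - g * d))"
              using True dg(4) a_r by (simp add: mult_left_mono)
            ultimately show "ereal (a * f r2 + (1 - a) * y) \<le> (SUP P\<in>Pclass c1 c2 h. fdiv f P (Q P))"
              by (meson ereal_less_eq(3) order_trans)
          qed
          then show ?thesis unfolding Fe using True by (simp add: f_ext_def)
        qed
      qed
    qed
    have "SQ \<le> F" unfolding SQ_def by (rule SUP_least) (rule upper)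
    moreover have "MM \<le> SQ" unfolding MM_def SQ_def minimax_risk_def by (rule INF_lower[OF samp])
    moreover have "F \<le> MM" unfolding MM_def minimax_risk_def by (rule INF_greatest) (rule lower)
    ultimately have "SQ = MM" "MM = F" by auto
    then show "SQ = MM" "MM = F" by auto
  qed
qed

end
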